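(* Let $W\in\mathcal W_0$ and let $\{W_n\}_{n\in\mathbb N}\subset\mathcal W_0$ satisfy $\|W_n-W\|_\square\to0$. For each $n$ let $u_n\in X_n$, and let $\nu^n\in\mathcal X$ be the Young measure $\nu^n_x=\delta_{u_n(x)}$. Suppose that $\nu^n\to\nu$ narrowly for some Young measure $\nu$; this always holds along a subsequence. Then $\nu\in\mathcal X$, so $\nu_x=\sum_{k=1}^N\theta_k(x)\delta_{\ell_k}$ for a.e. $x$. Moreover, $$\lim_{n\to\infty}\int_{[0,1]^2}W_n(x,y)\,f(u_n(x),u_n(y))\,dx\,dy=\int_{[0,1]^2}W(x,y)\Big(\int_{\mathbb R^2}f(\lambda,\mu)\,d\nu_x(\lambda)\,d\nu_y(\mu)\Big)dx\,dy.$$ The right-hand side equals $$\sum_{h,k=1}^N f(\ell_h,\ell_k)\int_{[0,1]^2}W(x,y)\,\theta_h(x)\,\theta_k(y)\,dx\,dy.$$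
   Context: A graphon is a bounded measurable symmetric function $W:[0,1]^2\to\mathbb R$. $\mathcal W_0$ denotes the set of graphons with values in $[0,1]$. The cut norm is $\|W\|_\square=\sup_{S,T\subseteq[0,1]}\big|\int_{S\times T}W\,dx\,dy\big|$, with the supremum over measurable sets. Fix a finite label set $\mathcal L=\{\ell_1,\dots,\ell_N\}\subset\mathbb R$ and a function $f:\mathcal L\times\mathcal L\to\mathbb R$. Set $I_1^n=[0,1/n]$ and $I_i^n=((i-1)/n,i/n]$ for $i=2,\dots,n$. $X_n$ is the set of measurable $u:[0,1]\to\mathcal L$ that are constant on each $I_i^n$. A Young measure on $[0,1]$ is a family $\{\nu_x\}_{x\in[0,1]}$ of Borel probability measures on $\mathbb R$ such that $x\mapsto\int f\,d\nu_x$ is measurable for every bounded continuous $f$. $\mathcal X$ is the set of Young measures with $\nu_x$ supported in $\mathcal L$ for a.e. $x$. Equivalently, $\nu_x=\sum_k\theta_k(x)\delta_{\ell_k}$ with measurable $\theta_k\ge0$ and $\sum_k\theta_k=1$. A sequence $\nu^n$ converges narrowly to $\nu$ if $\int_{\mathbb R}g\,d\nu^n_x\overset{*}{\rightharpoonup}\int_{\mathbb R}g\,d\nu_x$ in $L^\infty([0,1])$ for every bounded continuous $g:\mathbb R\to\mathbb R$. For sequences in $\mathcal X$, this is equivalent to $\theta^n_k\overset{*}{\rightharpoonup}\theta_k$ in $L^\infty([0,1])$ for every $k$. *)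

theory Defs
  imports "HOL-Probability.Probability"
begin

definition graphon :: "(real \<Rightarrow> real \<Rightarrow> real) \<Rightarrow> bool" where
  "graphon W \<longleftrightarrow>
     (\<lambda>z::real\<times>real. W (fst z) (snd z)) \<in> borel_measurable (restrict_space lebesgue ({0..1}\<times>{0..1}))
   \<and> (\<exists>C. \<forall>x\<in>{0..1}. \<forall>y\<in>{0..1}. \<bar>W x y\<bar> \<le> C)
   \<and> (\<forall>x\<in>{0..1}. \<forall>y\<in>{0..1}. W x y = W y x)"

definition graphon0 :: "(real \<Rightarrow> real \<Rightarrow> real) \<Rightarrow> bool" where
  "graphon0 W \<longleftrightarrow> graphon W \<and> (\<forall>x\<in>{0..1}. \<forall>y\<in>{0..1}. 0 \<le> W x y \<and> W x y \<le> 1)"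

definition cut_norm :: "(real \<Rightarrow> real \<Rightarrow> real) \<Rightarrow> real" where
  "cut_norm W = (SUP ST \<in> {(S,T). S \<in> sets (lebesgue :: real measure) \<and> T \<in> sets (lebesgue :: real measure)
                                   \<and> S \<subseteq> {0..1} \<and> T \<subseteq> {0..1}}.
       \<bar>LINT z : (fst ST \<times> snd ST) | (lebesgue :: (real\<times>real) measure). W (fst z) (snd z)\<bar>)"

definition Ival :: "nat \<Rightarrow> nat \<Rightarrow> real set" where
  "Ival n i = (if i = 1 then {0..1 / real n} else {(real i - 1) / real n <.. real i / real n})"

definition in_Xn :: "real set \<Rightarrow> nat \<Rightarrow> (real \<Rightarrow> real) \<Rightarrow> bool" where
  "in_Xn L n u \<longleftrightarrow> u \<in> borel_measurable (restrict_space lebesgue {0..1})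
     \<and> (\<forall>x\<in>{0..1}. u x \<in> L)
     \<and> (\<forall>i\<in>{1..n}. \<forall>x\<in>Ival n i. \<forall>y\<in>Ival n i. u x = u y)"

definition bounded_continuous_real :: "(real \<Rightarrow> real) \<Rightarrow> bool" where
  "bounded_continuous_real g \<longleftrightarrow> continuous_on UNIV g \<and> bounded (range g)"

definition young_measure :: "(real \<Rightarrow> real measure) \<Rightarrow> bool" where
  "young_measure \<nu> \<longleftrightarrow>
     (\<forall>x\<in>{0..1}. prob_space (\<nu> x) \<and> sets (\<nu> x) = sets (borel :: real measure))
   \<and> (\<forall>g. bounded_continuous_real g \<longrightarrow>
          (\<lambda>x. \<integral>t. g t \<partial>(\<nu> x)) \<in> borel_measurable (restrict_space lebesgue {0..1}))"

definition young_X :: "real set \<Rightarrow> (real \<Rightarrow> real measure) \<Rightarrow> bool" where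
  "young_X L \<nu> \<longleftrightarrow> young_measure \<nu>
     \<and> (AE x in lebesgue. x \<in> {0..1} \<longrightarrow> emeasure (\<nu> x) (UNIV - L) = 0)"

definition weak_star_Linf :: "(nat \<Rightarrow> real \<Rightarrow> real) \<Rightarrow> (real \<Rightarrow> real) \<Rightarrow> bool" where
  "weak_star_Linf G G0 \<longleftrightarrow>
     (\<forall>\<phi>. set_integrable lebesgue {0..1::real} \<phi> \<longrightarrow>
        (\<lambda>n. LINT x : {0..1} | lebesgue. \<phi> x * G n x) \<longlonglongrightarrow> (LINT x : {0..1} | lebesgue. \<phi> x * G0 x))"

definition narrow_conv :: "(nat \<Rightarrow> real \<Rightarrow> real measure) \<Rightarrow> (real \<Rightarrow> real measure) \<Rightarrow> bool" where
  "narrow_conv \<nu>s \<nu> \<longleftrightarrow>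
     (\<forall>g. bounded_continuous_real g \<longrightarrow>
        weak_star_Linf (\<lambda>n x. \<integral>t. g t \<partial>(\<nu>s n x)) (\<lambda>x. \<integral>t. g t \<partial>(\<nu> x)))"

definition theta_rep :: "real set \<Rightarrow> (real \<Rightarrow> real measure) \<Rightarrow> (real \<Rightarrow> real \<Rightarrow> real) \<Rightarrow> bool" where
  "theta_rep L \<nu> \<theta> \<longleftrightarrow>
     (\<forall>l\<in>L. \<theta> l \<in> borel_measurable (restrict_space lebesgue {0..1}) \<and> (\<forall>x\<in>{0..1}. 0 \<le> \<theta> l x))
   \<and> (\<forall>x\<in>{0..1}. (\<Sum>l\<in>L. \<theta> l x) = 1)
   \<and> (AE x in lebesgue. x \<in> {0..1} \<longrightarrow>
        (\<forall>A \<in> sets (borel :: real measure). measure (\<nu> x) A = (\<Sum>l\<in>L. \<theta> l x * indicator A l)))"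

end

theory Submission
  imports Defs
begin

lemma sets_lborel2: "sets (lborel \<Otimes>\<^sub>M lborel) = sets (borel :: (real\<times>real) measure)"
  by (metis lborel_prod sets_lborel)

lemma meas_lborel2: "W \<in> borel_measurable (borel :: (real\<times>real) measure) \<Longrightarrow> W \<in> borel_measurable (lborel \<Otimes>\<^sub>M lborel)"
  by (subst measurable_cong_sets[OF sets_lborel2 refl]) simp

lemma integrable_ind01[simp]: "integrable lborel (indicator {0..1::real} :: real \<Rightarrow> real)"
  by (rule integrable_real_indicator) auto

lemma tensor:
  fixes W :: "real \<times> real \<Rightarrow> real" and a b :: "nat \<Rightarrow> real \<Rightarrow> real" and a0 b0 :: "real \<Rightarrow> real"
  assumes Wm: "W \<in> borel_measurable borel" and Wb: "\<And>x y. \<bar>W (x,y)\<bar> \<le> indicator {0..1} x * indicator {0..1} y"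
    and am: "\<And>n. a n \<in> borel_measurable borel" "a0 \<in> borel_measurable borel"
    and bm: "\<And>n. b n \<in> borel_measurable borel" "b0 \<in> borel_measurable borel"
    and ab: "\<And>n x. \<bar>a n x\<bar> \<le> 1" "\<And>x. \<bar>a0 x\<bar> \<le> 1" "\<And>n x. \<bar>b n x\<bar> \<le> 1" "\<And>x. \<bar>b0 x\<bar> \<le> 1"
    and aw: "\<And>\<phi>. \<phi> \<in> borel_measurable borel \<Longrightarrow> integrable lborel (\<lambda>x. indicator {0..1} x * \<phi> x) \<Longrightarrow>
        (\<lambda>n. \<integral>x. indicator {0..1} x * \<phi> x * a n x \<partial>lborel) \<longlonglongrightarrow> (\<integral>x. indicator {0..1} x * \<phi> x * a0 x \<partial>lborel)"
    and bw: "\<And>\<phi>. \<phi> \<in> borel_measurable borel \<Longrightarrow> integrable lborel (\<lambda>x. indicator {0..1} x * \<phi> x) \<Longrightarrow>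
        (\<lambda>n. \<integral>x. indicator {0..1} x * \<phi> x * b n x \<partial>lborel) \<longlonglongrightarrow> (\<integral>x. indicator {0..1} x * \<phi> x * b0 x \<partial>lborel)"
  shows "(\<lambda>n. \<integral>z. W z * a n (fst z) * b n (snd z) \<partial>lborel) \<longlonglongrightarrow> (\<integral>z. W z * a0 (fst z) * b0 (snd z) \<partial>lborel)"
proof -
  have Wm2[measurable]: "W \<in> borel_measurable (lborel \<Otimes>\<^sub>M lborel)" using meas_lborel2[OF Wm] .
  note [measurable] = am bm
  define I :: "real \<Rightarrow> real" where "I = indicator {0..1}"
  have I01: "0 \<le> I x" "I x \<le> 1" for x by (auto simp: I_def indicator_def)
  have Im[measurable]: "I \<in> borel_measurable borel" unfolding I_def by simp
  have Ii: "integrable lborel I" by (simp add: I_def)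
  have I2i: "integrable (lborel \<Otimes>\<^sub>M lborel) (\<lambda>z. I (fst z) * I (snd z))"
  proof -
    have "(\<lambda>z. I (fst z) * I (snd z)) = indicator ({0..1}\<times>{0..1})"
      by (auto simp: I_def indicator_def fun_eq_iff)
    moreover have "integrable (lborel \<Otimes>\<^sub>M lborel) (indicator ({0..1::real}\<times>{0..1::real}) :: real\<times>real \<Rightarrow> real)"
      by (rule integrable_real_indicator) (auto simp: lborel.emeasure_pair_measure_Times)
    ultimately show ?thesis by simp
  qed
  have intI: "(\<integral>x. I x \<partial>lborel) = 1" by (simp add: I_def)
  have fub: "(\<integral>z. W z * c (fst z) * d (snd z) \<partial>lborel) = (\<integral>y. d y * (\<integral>x. W (x,y) * c x \<partial>lborel) \<partial>lborel)"
    if cm[measurable]: "c \<in> borel_measurable borel" "d \<in> borel_measurable borel" and cb: "\<And>x. \<bar>c x\<bar> \<le> 1" "\<And>x. \<bar>d x\<bar> \<le> 1" for c d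
  proof -
    have int: "integrable (lborel \<Otimes>\<^sub>M lborel) (\<lambda>(x,y). W (x,y) * c x * d y)"
    proof (rule Bochner_Integration.integrable_bound[OF I2i])
      show "(\<lambda>(x,y). W (x,y) * c x * d y) \<in> borel_measurable (lborel \<Otimes>\<^sub>M lborel)" by measurable
      show "AE z in lborel \<Otimes>\<^sub>M lborel. norm ((\<lambda>(x,y). W (x,y) * c x * d y) z) \<le> norm (I (fst z) * I (snd z))"
      proof (intro AE_I2)
        fix z :: "real \<times> real"
        obtain x y where z: "z = (x,y)" by (cases z)
        have "\<bar>W (x,y) * c x * d y\<bar> = \<bar>W (x,y)\<bar> * \<bar>c x\<bar> * \<bar>d y\<bar>" by (simp add: abs_mult)
        also have "\<dots> \<le> (I x * I y) * 1 * 1"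
          using Wb[of x y] cb(1)[of x] cb(2)[of y] by (intro mult_mono) (auto simp: I_def)
        finally show "norm ((\<lambda>(x,y). W (x,y) * c x * d y) z) \<le> norm (I (fst z) * I (snd z))"
          using I01[of x] I01[of y] z by simp
      qed
    qed
    have "(\<integral>z. W z * c (fst z) * d (snd z) \<partial>lborel) = (\<integral>z. W z * c (fst z) * d (snd z) \<partial>(lborel \<Otimes>\<^sub>M lborel))"
      by (simp add: lborel_prod)
    also have "\<dots> = integral\<^sup>L (lborel \<Otimes>\<^sub>M lborel) (\<lambda>(x,y). W (x,y) * c x * d y)"
      by (simp add: case_prod_beta')
    also have "\<dots> = (\<integral>y. (\<integral>x. W (x,y) * c x * d y \<partial>lborel) \<partial>lborel)"
      using lborel_pair.integral_snd[of "\<lambda>x y. W (x,y) * c x * d y", OF int] by simp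
    also have "\<dots> = (\<integral>y. d y * (\<integral>x. W (x,y) * c x \<partial>lborel) \<partial>lborel)"
      by (simp add: mult.commute)
    finally show ?thesis .
  qed
  define K where "K n y = (\<integral>x. W (x,y) * a n x \<partial>lborel)" for n y
  define K0 where "K0 y = (\<integral>x. W (x,y) * a0 x \<partial>lborel)" for y
  have Km[measurable]: "K n \<in> borel_measurable borel" for n
  proof -
    have "(\<lambda>(y,x). W (x,y) * a n x) \<in> borel_measurable (lborel \<Otimes>\<^sub>M lborel)" by measurable
    from lborel.borel_measurable_lebesgue_integral[OF this] show ?thesis
      unfolding K_def by simp
  qed
  have K0m[measurable]: "K0 \<in> borel_measurable borel"
  proof -
    have "(\<lambda>(y,x). W (x,y) * a0 x) \<in> borel_measurable (lborel \<Otimes>\<^sub>M lborel)" by measurable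
    from lborel.borel_measurable_lebesgue_integral[OF this] show ?thesis
      unfolding K0_def by simp
  qed
  have Wb1: "\<bar>W (x,y)\<bar> \<le> 1" for x y by (rule order_trans[OF Wb]) (simp add: mult_le_one)
  have WI: "W (x,y) = I x * W (x,y)" "W (x,y) = I y * W (x,y)" for x y
    using Wb[of x y] by (cases "x\<in>{0..1}"; cases "y\<in>{0..1}"; simp add: I_def)+
  have Kb: "\<bar>(\<integral>x. W (x,y) * c x \<partial>lborel)\<bar> \<le> I y"
    if [measurable]: "c \<in> borel_measurable borel" and cb: "\<And>x. \<bar>c x\<bar> \<le> 1" for c y
  proof -
    have bd: "\<bar>W (x,y) * c x\<bar> \<le> I x * I y" for x
    proof -
      have "\<bar>W (x,y) * c x\<bar> = \<bar>W (x,y)\<bar> * \<bar>c x\<bar>" by (simp add: abs_mult)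
      also have "\<dots> \<le> (I x * I y) * 1" using Wb[of x y] cb[of x] by (intro mult_mono) (auto simp: I_def)
      finally show ?thesis by simp
    qed
    have i2: "integrable lborel (\<lambda>x. I x * I y)" using Ii by simp
    have i1: "integrable lborel (\<lambda>x. W (x,y) * c x)"
      by (rule Bochner_Integration.integrable_bound[OF i2]) (use bd I01 in \<open>auto intro!: AE_I2\<close>)
    have "\<bar>(\<integral>x. W (x,y) * c x \<partial>lborel)\<bar> \<le> (\<integral>x. I x * I y \<partial>lborel)"
      by (rule integral_abs_bound_integral[OF i1 i2 bd])
    also have "\<dots> = I y" using intI by simp
    finally show ?thesis .
  qed
  have Knb: "\<bar>K n y\<bar> \<le> I y" for n y unfolding K_def by (rule Kb) (use ab am in auto)
  have K0b: "\<bar>K0 y\<bar> \<le> I y" for y unfolding K0_def by (rule Kb) (use ab am in auto)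
  have Kconv: "(\<lambda>n. K n y) \<longlonglongrightarrow> K0 y" for y
  proof -
    have m: "(\<lambda>x. W (x,y)) \<in> borel_measurable borel"
    proof -
      have "(\<lambda>x. W (x,y)) \<in> borel_measurable lborel" by measurable
      then show ?thesis by simp
    qed
    have i: "integrable lborel (\<lambda>x. indicator {0..1} x * W (x,y))"
    proof (rule Bochner_Integration.integrable_bound[OF Ii])
      show "(\<lambda>x. indicator {0..1} x * W (x,y)) \<in> borel_measurable lborel" using m by simp
      show "AE x in lborel. norm (indicator {0..1} x * W (x,y)) \<le> norm (I x)"
      proof (intro AE_I2)
        fix x
        have "\<bar>indicator {0..1} x * W (x,y)\<bar> \<le> I x * 1"
          unfolding abs_mult I_def using Wb1[of x y]
          by (intro mult_mono) auto
        then show "norm (indicator {0..1} x * W (x,y)) \<le> norm (I x)" using I01[of x] by simp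
      qed
    qed
    have e: "indicator {0..1} x * W (x,y) = W (x,y)" for x using WI(1)[of x y] by (metis I_def)
    from aw[OF m i] show ?thesis
      unfolding K_def K0_def e .
  qed
  define D where "D n = (\<integral>y. \<bar>K n y - K0 y\<bar> \<partial>lborel)" for n
  have D0: "D \<longlonglongrightarrow> 0"
  proof -
    have "(\<lambda>n. \<integral>y. \<bar>K n y - K0 y\<bar> \<partial>lborel) \<longlonglongrightarrow> (\<integral>y. 0 \<partial>(lborel::real measure))"
    proof (rule Bochner_Integration.integral_dominated_convergence[where w="\<lambda>y. 2 * I y" and s="\<lambda>n y. \<bar>K n y - K0 y\<bar>" and f="\<lambda>_. 0" and M=lborel])
      show "integrable lborel (\<lambda>y. 2 * I y)" using Ii by simp
      show "AE y in lborel. (\<lambda>n. \<bar>K n y - K0 y\<bar>) \<longlonglongrightarrow> 0"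
      proof (intro AE_I2)
        fix y
        have "(\<lambda>n. K n y - K0 y) \<longlonglongrightarrow> 0" using Kconv[of y] by (simp add: LIM_zero)
        then show "(\<lambda>n. \<bar>K n y - K0 y\<bar>) \<longlonglongrightarrow> 0" using tendsto_rabs by fastforce
      qed
      show "AE y in lborel. norm \<bar>K n y - K0 y\<bar> \<le> 2 * I y" for n
      proof (intro AE_I2)
        fix y show "norm \<bar>K n y - K0 y\<bar> \<le> 2 * I y" using Knb[of n y] K0b[of y] by simp
      qed
    qed auto
    then show ?thesis unfolding D_def by simp
  qed
  have ibd: "integrable lborel (\<lambda>y. c y * d y)"
    if [measurable]: "c \<in> borel_measurable borel" "d \<in> borel_measurable borel" and "\<And>y. \<bar>c y\<bar> \<le> 1" "\<And>y. \<bar>d y\<bar> \<le> I y" for c d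
  proof (rule Bochner_Integration.integrable_bound[OF Ii])
    show "(\<lambda>y. c y * d y) \<in> borel_measurable lborel" by simp
    show "AE y in lborel. norm (c y * d y) \<le> norm (I y)"
    proof (intro AE_I2)
      fix y
      have "\<bar>c y * d y\<bar> = \<bar>c y\<bar> * \<bar>d y\<bar>" by (simp add: abs_mult)
      also have "\<dots> \<le> 1 * I y" using that(3,4)[of y] by (intro mult_mono) auto
      finally show "norm (c y * d y) \<le> norm (I y)" using I01[of y] by simp
    qed
  qed
  define cc where "cc n = (\<integral>y. b n y * K0 y \<partial>lborel) - (\<integral>y. b0 y * K0 y \<partial>lborel)" for n
  have cc0: "cc \<longlonglongrightarrow> 0"
  proof -
    have K0I: "K0 y = I y * K0 y" for y using K0b[of y] by (cases "y \<in> {0..1}") (simp_all add: I_def)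
    have i: "integrable lborel (\<lambda>x. indicator {0..1} x * K0 x)"
      using ibd[of I K0] K0b I01 unfolding I_def by simp
    from bw[OF K0m i] have "(\<lambda>n. \<integral>y. b n y * K0 y \<partial>lborel) \<longlonglongrightarrow> (\<integral>y. b0 y * K0 y \<partial>lborel)"
      by (subst (1 2) K0I) (simp add: I_def mult_ac)
    then show ?thesis unfolding cc_def by (simp add: LIM_zero)
  qed
  have main: "(\<lambda>n. (\<integral>y. b n y * K n y \<partial>lborel) - (\<integral>y. b0 y * K0 y \<partial>lborel)) \<longlonglongrightarrow> 0"
  proof (rule Lim_null_comparison)
    have Dcc: "(\<lambda>n. D n + \<bar>cc n\<bar>) \<longlonglongrightarrow> 0"
      using tendsto_add[OF D0 tendsto_rabs_zero[OF cc0]] by simp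
    show "(\<lambda>n. D n + \<bar>cc n\<bar>) \<longlonglongrightarrow> 0" by (rule Dcc)
    show "\<forall>\<^sub>F n in sequentially. norm ((\<integral>y. b n y * K n y \<partial>lborel) - (\<integral>y. b0 y * K0 y \<partial>lborel)) \<le> D n + \<bar>cc n\<bar>"
    proof (intro always_eventually allI)
      fix n
      have i1: "integrable lborel (\<lambda>y. b n y * K n y)" by (rule ibd) (use ab Knb bm in auto)
      have i2: "integrable lborel (\<lambda>y. b n y * K0 y)" by (rule ibd) (use ab K0b bm in auto)
      have i3: "integrable lborel (\<lambda>y. b n y * (K n y - K0 y))"
        using Bochner_Integration.integrable_diff[OF i1 i2] by (simp add: algebra_simps)
      have i4: "integrable lborel (\<lambda>y. \<bar>K n y - K0 y\<bar>)"
        using Bochner_Integration.integrable_abs[OF Bochner_Integration.integrable_diff[OF ibd[of "\<lambda>_. 1" "K n"] ibd[of "\<lambda>_. 1" K0]]] Knb K0b by simp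
      have eq: "(\<integral>y. b n y * K n y \<partial>lborel) - (\<integral>y. b0 y * K0 y \<partial>lborel) = (\<integral>y. b n y * (K n y - K0 y) \<partial>lborel) + cc n"
        unfolding cc_def using i1 i2 by (simp add: algebra_simps)
      have "\<bar>\<integral>y. b n y * (K n y - K0 y) \<partial>lborel\<bar> \<le> D n"
        unfolding D_def
      proof (rule integral_abs_bound_integral[OF i3 i4])
        fix y
        have "\<bar>b n y * (K n y - K0 y)\<bar> = \<bar>b n y\<bar> * \<bar>K n y - K0 y\<bar>" by (simp add: abs_mult)
        also have "\<dots> \<le> 1 * \<bar>K n y - K0 y\<bar>" using ab(3)[of n y] by (intro mult_right_mono) auto
        finally show "\<bar>b n y * (K n y - K0 y)\<bar> \<le> \<bar>K n y - K0 y\<bar>" by simp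
      qed
      then show "norm ((\<integral>y. b n y * K n y \<partial>lborel) - (\<integral>y. b0 y * K0 y \<partial>lborel)) \<le> D n + \<bar>cc n\<bar>"
        unfolding eq by simp
    qed
  qed
  have "(\<lambda>n. \<integral>z. W z * a n (fst z) * b n (snd z) \<partial>lborel) = (\<lambda>n. \<integral>y. b n y * K n y \<partial>lborel)"
    unfolding K_def by (intro ext fub) (use am bm ab in auto)
  moreover have "(\<integral>z. W z * a0 (fst z) * b0 (snd z) \<partial>lborel) = (\<integral>y. b0 y * K0 y \<partial>lborel)"
    unfolding K0_def by (intro fub) (use am bm ab in auto)
  ultimately show ?thesis using main by (simp add: LIM_zero_iff)
qed

definition bv :: "('a::euclidean_space \<Rightarrow> real) \<Rightarrow> 'a \<Rightarrow> real" where
  "bv f = (SOME g. g \<in> borel_measurable borel \<and> (AE x in lborel. f x = g x))"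

lemma bv:
  fixes f :: "'a::euclidean_space \<Rightarrow> real"
  assumes "f \<in> borel_measurable lebesgue"
  shows "bv f \<in> borel_measurable borel" "AE x in lborel. f x = bv f x"
proof -
  from completion_ex_borel_measurable_real[OF assms]
  have "\<exists>g. g \<in> borel_measurable borel \<and> (AE x in lborel. f x = g x)" by auto
  from someI_ex[OF this] show "bv f \<in> borel_measurable borel" "AE x in lborel. f x = bv f x"
    unfolding bv_def by auto
qed

definition bvs :: "'a::euclidean_space set \<Rightarrow> real \<Rightarrow> ('a \<Rightarrow> real) \<Rightarrow> 'a \<Rightarrow> real" where
  "bvs S c f x = indicator S x * max (-c) (min c (bv f x))"

lemma bvs:
  fixes f :: "'a::euclidean_space \<Rightarrow> real"
  assumes f: "f \<in> borel_measurable lebesgue" and S: "S \<in> sets borel"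
    and b: "\<And>x. \<bar>f x\<bar> \<le> c" and z: "\<And>x. x \<notin> S \<Longrightarrow> f x = 0"
  shows "bvs S c f \<in> borel_measurable borel" "\<And>x. \<bar>bvs S c f x\<bar> \<le> c" "\<And>x. x \<notin> S \<Longrightarrow> bvs S c f x = 0"
    "AE x in lborel. f x = bvs S c f x"
proof -
  note [measurable] = bv(1)[OF f] S
  show "bvs S c f \<in> borel_measurable borel" unfolding bvs_def by measurable
  have c: "0 \<le> c" using b[of undefined] by simp
  show "\<bar>bvs S c f x\<bar> \<le> c" for x using c unfolding bvs_def indicator_def by auto
  show "x \<notin> S \<Longrightarrow> bvs S c f x = 0" for x unfolding bvs_def by simp
  show "AE x in lborel. f x = bvs S c f x"
    using bv(2)[OF f]
  proof eventually_elim
    case (elim x)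
    then show ?case using b[of x] z[of x] unfolding bvs_def indicator_def
      by (cases "x \<in> S") auto
  qed
qed

lemma leb2lborel:
  fixes f g :: "'a::euclidean_space \<Rightarrow> real"
  assumes ae: "AE x in lborel. f x = g x" and g: "g \<in> borel_measurable borel"
  shows "lebesgue_integral lebesgue f = lebesgue_integral lborel g" "f \<in> borel_measurable lebesgue"
    "integrable lborel g \<Longrightarrow> integrable lebesgue f"
proof -
  have g1: "g \<in> borel_measurable lebesgue" using measurable_completion[of g lborel borel] g by simp
  have ae2: "AE x in lebesgue. g x = f x" using AE_completion[OF ae] by (auto elim: AE_mp)
  show f1: "f \<in> borel_measurable lebesgue" by (rule borel_measurable_AE[OF g1 ae2])
  have "lebesgue_integral lebesgue f = lebesgue_integral lebesgue g"
    by (rule integral_cong_AE[OF f1 g1]) (use ae2 in auto)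
  also have "\<dots> = lebesgue_integral lborel g" by (rule integral_completion) (use g in simp)
  finally show "lebesgue_integral lebesgue f = lebesgue_integral lborel g" .
  assume "integrable lborel g"
  then have "integrable lebesgue g" using integrable_completion[of g lborel] g by simp
  then show "integrable lebesgue f"
    by (rule integrable_cong_AE_imp[OF _ f1]) (use ae in \<open>auto intro: AE_completion\<close>)
qed

lemma AE_fst:
  assumes "AE x in lborel. P x"
  shows "AE z in (lborel :: (real\<times>real) measure). P (fst z)"
proof -
  obtain N where N: "N \<in> null_sets lborel" "{x \<in> space lborel. \<not> P x} \<subseteq> N"
    by (rule AE_E[OF assms]) blast
  have "N \<times> UNIV \<in> null_sets (lborel \<Otimes>\<^sub>M (lborel :: real measure))"
    using N(1) by (auto simp: null_sets_def lborel.emeasure_pair_measure_Times)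
  then have "AE z in (lborel \<Otimes>\<^sub>M (lborel :: real measure)). P (fst z)"
    by (rule AE_I') (use N(2) in auto)
  then show ?thesis by (simp only: lborel_prod)
qed

lemma AE_snd:
  assumes "AE x in lborel. P x"
  shows "AE z in (lborel :: (real\<times>real) measure). P (snd z)"
proof -
  obtain N where N: "N \<in> null_sets lborel" "{x \<in> space lborel. \<not> P x} \<subseteq> N"
    by (rule AE_E[OF assms]) blast
  have "UNIV \<times> N \<in> null_sets (lborel \<Otimes>\<^sub>M (lborel :: real measure))"
    using N(1) by (auto simp: null_sets_def lborel.emeasure_pair_measure_Times)
  then have "AE z in (lborel \<Otimes>\<^sub>M (lborel :: real measure)). P (snd z)"
    by (rule AE_I') (use N(2) in auto)
  then show ?thesis by (simp only: lborel_prod)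
qed

lemma disc_of_rep:
  assumes \<nu>: "young_measure \<nu>" and r: "theta_rep L \<nu> \<theta>" and L: "finite L"
  shows "AE x in lborel. x \<in> {0..1} \<longrightarrow> (\<forall>l\<in>L. measure (\<nu> x) {l} = \<theta> l x) \<and> (AE t in \<nu> x. t \<in> L)"
proof -
  have "AE x in lebesgue. x \<in> {0..1} \<longrightarrow>
        (\<forall>A \<in> sets (borel :: real measure). measure (\<nu> x) A = (\<Sum>l\<in>L. \<theta> l x * indicator A l))"
    using r unfolding theta_rep_def by blast
  then have "AE x in lborel. x \<in> {0..1} \<longrightarrow>
        (\<forall>A \<in> sets (borel :: real measure). measure (\<nu> x) A = (\<Sum>l\<in>L. \<theta> l x * indicator A l))"
    by (simp add: AE_completion_iff)
  then show ?thesis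
  proof (rule AE_mp, intro AE_I2 impI)
    fix x :: real
    assume x: "x \<in> {0..1}" and m: "x \<in> {0..1} \<longrightarrow>
        (\<forall>A \<in> sets (borel :: real measure). measure (\<nu> x) A = (\<Sum>l\<in>L. \<theta> l x * indicator A l))"
    then have m: "\<And>A. A \<in> sets borel \<Longrightarrow> measure (\<nu> x) A = (\<Sum>l\<in>L. \<theta> l x * indicator A l)" by auto
    from \<nu> x have P: "prob_space (\<nu> x)" and S: "sets (\<nu> x) = sets borel"
      unfolding young_measure_def by auto
    interpret P: prob_space "\<nu> x" by (rule P)
    have sp: "space (\<nu> x) = UNIV" using sets_eq_imp_space_eq[OF S] by simp
    have "measure (\<nu> x) {l} = \<theta> l x" if l: "l \<in> L" for l
    proof -
      have "measure (\<nu> x) {l} = (\<Sum>m\<in>L. \<theta> m x * indicator {l} m)" by (rule m) simp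
      also have "\<dots> = (\<Sum>m\<in>L. if l = m then \<theta> m x else 0)"
        by (rule sum.cong) (auto simp: indicator_def)
      also have "\<dots> = \<theta> l x" using L l by (simp add: sum.delta)
      finally show ?thesis .
    qed
    moreover have "AE t in \<nu> x. t \<in> L"
    proof -
      have Ls: "UNIV - L \<in> sets (borel :: real measure)"
        using L by (intro borel_open) (simp add: open_Diff finite_imp_closed)
      have "measure (\<nu> x) (UNIV - L) = (\<Sum>m\<in>L. \<theta> m x * indicator (UNIV - L) m)" by (rule m[OF Ls])
      also have "\<dots> = 0" by (rule sum.neutral) auto
      finally have "emeasure (\<nu> x) (UNIV - L) = 0" using P.emeasure_eq_measure by simp
      then have "UNIV - L \<in> null_sets (\<nu> x)" using Ls S by (simp add: null_sets_def)
      from AE_not_in[OF this] show ?thesis by simp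
    qed
    ultimately show "(\<forall>l\<in>L. measure (\<nu> x) {l} = \<theta> l x) \<and> (AE t in \<nu> x. t \<in> L)" by auto
  qed
qed

lemma int_disc:
  fixes g :: "real \<Rightarrow> real"
  assumes P: "prob_space M" and S: "sets M = sets borel" and ae: "AE t in M. t \<in> L" and L: "finite L"
    and g: "g \<in> borel_measurable borel"
  shows "(\<integral>t. g t \<partial>M) = (\<Sum>l\<in>L. g l * measure M {l})"
proof -
  interpret P: prob_space M by (rule P)
  have sp: "space M = UNIV" using sets_eq_imp_space_eq[OF S] by simp
  have gm[measurable]: "g \<in> borel_measurable M" by (subst measurable_cong_sets[OF S refl]) (rule g)
  have sing[measurable]: "{l} \<in> sets M" for l using S by simp
  have "(\<integral>t. g t \<partial>M) = (\<integral>t. (\<Sum>l\<in>L. g l * indicator {l} t) \<partial>M)"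
  proof (rule integral_cong_AE)
    show "(\<lambda>t. \<Sum>l\<in>L. g l * indicator {l} t) \<in> borel_measurable M" by measurable
    show "AE t in M. g t = (\<Sum>l\<in>L. g l * indicator {l} t)"
      using ae
    proof eventually_elim
      case (elim t)
      have "(\<Sum>l\<in>L. g l * indicator {l} t) = (\<Sum>l\<in>L. if t = l then g l else 0)"
        by (rule sum.cong) (auto simp: indicator_def)
      also have "\<dots> = g t" using elim L by (simp add: sum.delta)
      finally show ?case by simp
    qed
  qed (rule gm)
  also have "\<dots> = (\<Sum>l\<in>L. g l * measure M {l})"
  proof -
    have "integrable M (\<lambda>t. g l * indicator {l} t)" for l
      by (intro integrable_mult_right integrable_real_indicator) (auto simp: sp top.not_eq_extremum[symmetric])
    then show ?thesis by (simp add: Bochner_Integration.integral_sum sp)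
  qed
  finally show ?thesis .
qed

lemma prod_disc:
  fixes f :: "real \<Rightarrow> real \<Rightarrow> real"
  assumes P: "prob_space M" "prob_space N" and S: "sets M = sets borel" "sets N = sets borel" and L: "finite L"
  shows "(\<integral>p. (if fst p \<in> L \<and> snd p \<in> L then f (fst p) (snd p) else 0) \<partial>(M \<Otimes>\<^sub>M N))
     = (\<Sum>h\<in>L. \<Sum>k\<in>L. f h k * (measure M {h} * measure N {k}))"
proof -
  interpret P1: prob_space M by (rule P(1))
  interpret P2: prob_space N by (rule P(2))
  interpret PP: pair_prob_space M N ..
  have sp: "space M = UNIV" "space N = UNIV" using sets_eq_imp_space_eq[OF S(1)] sets_eq_imp_space_eq[OF S(2)] by simp_all
  have sing: "{h} \<times> {k} \<in> sets (M \<Otimes>\<^sub>M N)" for h k by (rule pair_measureI) (use S in auto)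
  have eq: "(if fst p \<in> L \<and> snd p \<in> L then f (fst p) (snd p) else 0)
      = (\<Sum>h\<in>L. \<Sum>k\<in>L. f h k * indicator ({h} \<times> {k}) p)" for p
  proof -
    obtain a b where p: "p = (a,b)" by (cases p)
    have "(\<Sum>h\<in>L. \<Sum>k\<in>L. f h k * indicator ({h} \<times> {k}) p) = (\<Sum>h\<in>L. if a = h then (\<Sum>k\<in>L. if b = k then f h k else 0) else 0)"
    proof (rule sum.cong[OF refl])
      fix h assume "h \<in> L"
      have i: "f h k * indicator ({h} \<times> {k}) p = (if a = h then (if b = k then f h k else 0) else 0)" for k
        by (simp add: p split: split_indicator)
      show "(\<Sum>k\<in>L. f h k * indicator ({h} \<times> {k}) p) = (if a = h then (\<Sum>k\<in>L. if b = k then f h k else 0) else 0)"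
        unfolding i by simp
    qed
    also have "\<dots> = (if a \<in> L \<and> b \<in> L then f a b else 0)" using L by (simp add: sum.delta)
    finally show ?thesis by (simp add: p)
  qed
  have mt: "measure (M \<Otimes>\<^sub>M N) ({h} \<times> {k}) = measure M {h} * measure N {k}" for h k
  proof -
    have "emeasure (M \<Otimes>\<^sub>M N) ({h} \<times> {k}) = emeasure M {h} * emeasure N {k}"
      by (rule P2.emeasure_pair_measure_Times) (use S in auto)
    then show ?thesis by (simp add: measure_def enn2real_mult)
  qed
  have "(\<integral>p. (if fst p \<in> L \<and> snd p \<in> L then f (fst p) (snd p) else 0) \<partial>(M \<Otimes>\<^sub>M N))
      = (\<integral>p. (\<Sum>h\<in>L. \<Sum>k\<in>L. f h k * indicator ({h} \<times> {k}) p) \<partial>(M \<Otimes>\<^sub>M N))"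
    by (simp only: eq)
  also have "\<dots> = (\<Sum>h\<in>L. \<Sum>k\<in>L. f h k * measure (M \<Otimes>\<^sub>M N) ({h} \<times> {k}))"
  proof -
    have "integrable (M \<Otimes>\<^sub>M N) (\<lambda>p. f h k * indicator ({h} \<times> {k}) p)" for h k
      using sing by (intro integrable_mult_right integrable_real_indicator) (auto simp: top.not_eq_extremum[symmetric])
    then show ?thesis using sing by (simp add: Bochner_Integration.integral_sum Bochner_Integration.integrable_sum space_pair_measure sp)
  qed
  also have "\<dots> = (\<Sum>h\<in>L. \<Sum>k\<in>L. f h k * (measure M {h} * measure N {k}))"
    using mt by simp
  finally show ?thesis .
qed

definition dL :: "real set \<Rightarrow> real" where
  "dL L = Min (insert 1 ((\<lambda>p. \<bar>fst p - snd p\<bar>) ` {p \<in> L \<times> L. fst p \<noteq> snd p}))"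

definition bump :: "real set \<Rightarrow> real \<Rightarrow> real \<Rightarrow> real" where
  "bump L l t = max 0 (1 - \<bar>t - l\<bar> / dL L)"

definition gL :: "real set \<Rightarrow> real \<Rightarrow> real" where
  "gL L t = min 1 (\<Prod>l\<in>L. \<bar>t - l\<bar>)"

lemma dL_fin: "finite L \<Longrightarrow> finite (insert 1 ((\<lambda>p. \<bar>fst p - snd p\<bar>) ` {p \<in> L \<times> L. fst p \<noteq> snd p}))"
  by simp

lemma dL_pos: "finite L \<Longrightarrow> 0 < dL L"
  unfolding dL_def by (subst Min_gr_iff[OF dL_fin]) auto

lemma dL_le: "finite L \<Longrightarrow> a \<in> L \<Longrightarrow> b \<in> L \<Longrightarrow> a \<noteq> b \<Longrightarrow> dL L \<le> \<bar>a - b\<bar>"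
  unfolding dL_def by (rule Min_le[OF dL_fin]) (auto intro!: image_eqI[of _ _ "(a,b)"])

lemma bump_self: "finite L \<Longrightarrow> bump L l l = 1"
  unfolding bump_def using dL_pos by simp

lemma bump_other: "finite L \<Longrightarrow> l \<in> L \<Longrightarrow> m \<in> L \<Longrightarrow> m \<noteq> l \<Longrightarrow> bump L l m = 0"
proof -
  assume L: "finite L" "l \<in> L" "m \<in> L" "m \<noteq> l"
  have "dL L \<le> \<bar>m - l\<bar>" using dL_le[OF L(1,3,2,4)] .
  then have "1 \<le> \<bar>m - l\<bar> / dL L" using dL_pos[OF L(1)] by simp
  then show ?thesis unfolding bump_def by simp
qed

lemma bump_L: "finite L \<Longrightarrow> l \<in> L \<Longrightarrow> m \<in> L \<Longrightarrow> bump L l m = (if m = l then 1 else 0)"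
  using bump_self bump_other by auto

lemma bump_01: "finite L \<Longrightarrow> 0 \<le> bump L l t \<and> bump L l t \<le> 1"
  unfolding bump_def using dL_pos[of L] by auto

lemma bump_bc: "finite L \<Longrightarrow> bounded_continuous_real (bump L l)"
  unfolding bounded_continuous_real_def
proof
  assume L: "finite L"
  show "continuous_on UNIV (bump L l)" unfolding bump_def by (intro continuous_intros) (use dL_pos[OF L] in auto)
  show "bounded (range (bump L l))" unfolding bounded_iff using bump_01[OF L] by (intro exI[of _ 1]) auto
qed

lemma gL_01: "0 \<le> gL L t \<and> gL L t \<le> 1"
  unfolding gL_def by (auto simp: prod_nonneg)

lemma gL_zero: "finite L \<Longrightarrow> gL L t = 0 \<longleftrightarrow> t \<in> L"
proof -
  assume L: "finite L"
  have p: "(\<Prod>l\<in>L. \<bar>t - l\<bar>) = 0 \<longleftrightarrow> t \<in> L" by (simp add: prod_zero_iff[OF L])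
  have "0 \<le> (\<Prod>l\<in>L. \<bar>t - l\<bar>)" by (simp add: prod_nonneg)
  then show ?thesis unfolding gL_def using p by (auto simp: min_def)
qed

lemma gL_bc: "bounded_continuous_real (gL L)"
  unfolding bounded_continuous_real_def
proof
  show "continuous_on UNIV (gL L)" unfolding gL_def
    by (intro continuous_on_min continuous_on_const continuous_on_prod continuous_on_rabs continuous_on_diff continuous_on_id)
  show "bounded (range (gL L))" unfolding bounded_iff
  proof (intro exI[of _ 1] ballI)
    fix y assume "y \<in> range (gL L)"
    then obtain t where "y = gL L t" by auto
    then show "norm y \<le> 1" using gL_01[of L t] by simp
  qed
qed

lemma bc_meas: "bounded_continuous_real g \<Longrightarrow> g \<in> borel_measurable borel"
  unfolding bounded_continuous_real_def by (intro borel_measurable_continuous_onI) auto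

lemma bc_bound: "bounded_continuous_real g \<Longrightarrow> \<exists>B. \<forall>t. \<bar>g t\<bar> \<le> B"
  unfolding bounded_continuous_real_def bounded_iff by auto

lemma prob_int_bound:
  fixes g :: "real \<Rightarrow> real"
  assumes P: "prob_space M" and g: "g \<in> borel_measurable M" and b: "\<And>t. \<bar>g t\<bar> \<le> B"
  shows "\<bar>\<integral>t. g t \<partial>M\<bar> \<le> B" "integrable M g"
proof -
  interpret P: prob_space M by (rule P)
  show gi: "integrable M g" by (rule P.integrable_const_bound[where B=B]) (use b g in auto)
  have "\<bar>\<integral>t. g t \<partial>M\<bar> \<le> (\<integral>t. B \<partial>M)"
    by (rule integral_abs_bound_integral[OF gi]) (use b in auto)
  also have "\<dots> = B" by (simp add: P.prob_space)
  finally show "\<bar>\<integral>t. g t \<partial>M\<bar> \<le> B" .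
qed

lemma ym: "young_measure \<nu> \<Longrightarrow> x \<in> {0..1} \<Longrightarrow> prob_space (\<nu> x) \<and> sets (\<nu> x) = sets borel"
  unfolding young_measure_def by auto

lemma ym_meas: "young_measure \<nu> \<Longrightarrow> x \<in> {0..1} \<Longrightarrow> g \<in> borel_measurable borel \<Longrightarrow> g \<in> borel_measurable (\<nu> x)"
  using ym[of \<nu> x] by (subst measurable_cong_sets[of "\<nu> x" borel]) auto

lemma ym_int: "young_measure \<nu> \<Longrightarrow> bounded_continuous_real g \<Longrightarrow>
   (\<lambda>x. indicator {0..1} x * (\<integral>t. g t \<partial>\<nu> x)) \<in> borel_measurable lebesgue"
proof -
  assume y: "young_measure \<nu>" and g: "bounded_continuous_real g"
  then have "(\<lambda>x. \<integral>t. g t \<partial>\<nu> x) \<in> borel_measurable (restrict_space lebesgue {0..1})"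
    unfolding young_measure_def by blast
  then show ?thesis by (subst (asm) borel_measurable_restrict_space_iff) auto
qed

lemma set_int_01: "set_integrable lebesgue {0..1::real} (\<lambda>_. 1::real)"
  unfolding set_integrable_def by (simp add: integrable_real_indicator)

lemma good_ae:
  fixes u :: "nat \<Rightarrow> real \<Rightarrow> real"
  assumes L: "finite L" and \<nu>: "young_measure \<nu>"
    and u: "\<And>n x. x \<in> {0..1} \<Longrightarrow> u n x \<in> L"
    and conv: "narrow_conv (\<lambda>n x. return borel (u n x)) \<nu>"
  shows "AE x in lborel. x \<in> {0..1} \<longrightarrow> (AE t in \<nu> x. t \<in> L)"
proof -
  define H where "H x = (\<integral>t. gL L t \<partial>\<nu> x)" for x
  have w: "weak_star_Linf (\<lambda>n x. \<integral>t. gL L t \<partial>return borel (u n x)) H"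
    unfolding H_def by (rule conv[unfolded narrow_conv_def, rule_format, OF gL_bc])
  have lim: "(\<lambda>n. LINT x : {0..1} | lebesgue. 1 * (\<integral>t. gL L t \<partial>return borel (u n x))) \<longlonglongrightarrow> (LINT x : {0..1} | lebesgue. 1 * H x)"
    by (rule w[unfolded weak_star_Linf_def, rule_format, OF set_int_01])
  have z: "(LINT x : {0..1} | lebesgue. 1 * (\<integral>t. gL L t \<partial>return borel (u n x))) = 0" for n
  proof -
    have "(\<lambda>x. indicator {0..1} x *\<^sub>R (1 * (\<integral>t. gL L t \<partial>return borel (u n x)))) = (\<lambda>x. 0)"
    proof
      fix x :: real
      show "indicator {0..1} x *\<^sub>R (1 * (\<integral>t. gL L t \<partial>return borel (u n x))) = 0"
      proof (cases "x \<in> {0..1}")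
        case True
        have "(\<integral>t. gL L t \<partial>return borel (u n x)) = gL L (u n x)"
          by (rule integral_return) (auto intro: bc_meas gL_bc)
        also have "\<dots> = 0" using gL_zero[OF L] u[OF True] by simp
        finally show ?thesis by simp
      qed simp
    qed
    then show ?thesis unfolding set_lebesgue_integral_def by simp
  qed
  have I0: "(LINT x : {0..1} | lebesgue. 1 * H x) = 0"
    using lim unfolding z by (simp add: LIMSEQ_const_iff)
  have Hm: "(\<lambda>x. indicator {0..1} x * H x) \<in> borel_measurable lebesgue"
    unfolding H_def by (rule ym_int[OF \<nu> gL_bc])
  have Hb: "0 \<le> H x \<and> H x \<le> 1" if "x \<in> {0..1}" for x
  proof -
    have P: "prob_space (\<nu> x)" using ym[OF \<nu> that] by simp
    have m: "gL L \<in> borel_measurable (\<nu> x)" by (rule ym_meas[OF \<nu> that bc_meas[OF gL_bc]])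
    have "\<bar>H x\<bar> \<le> 1" unfolding H_def by (rule prob_int_bound[OF P m]) (use gL_01 in auto)
    moreover have "0 \<le> H x" unfolding H_def by (rule Bochner_Integration.integral_nonneg) (use gL_01 in auto)
    ultimately show ?thesis by simp
  qed
  have Hi: "integrable lebesgue (\<lambda>x. indicator {0..1} x * H x)"
  proof (rule Bochner_Integration.integrable_bound[where f="indicator {0..1::real} :: real \<Rightarrow> real"])
    show "integrable lebesgue (indicator {0..1::real} :: real \<Rightarrow> real)" by (simp add: integrable_real_indicator)
    show "AE x in lebesgue. norm (indicator {0..1} x * H x) \<le> norm (indicator {0..1::real} x :: real)"
      using Hb by (intro AE_I2) (auto simp: indicator_def)
  qed (rule Hm)
  have "(\<integral>x. indicator {0..1} x * H x \<partial>lebesgue) = 0"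
    using I0 unfolding set_lebesgue_integral_def by simp
  then have "AE x in lebesgue. indicator {0..1} x * H x = 0"
  proof -
    have nn: "AE x in lebesgue. 0 \<le> indicator {0..1} x * H x"
      using Hb by (intro AE_I2) (auto split: split_indicator)
    show ?thesis using integral_nonneg_eq_0_iff_AE[OF Hi nn] \<open>(\<integral>x. indicator {0..1} x * H x \<partial>lebesgue) = 0\<close> by simp
  qed
  then have ae: "AE x in lborel. indicator {0..1} x * H x = 0"
    by (simp add: AE_completion_iff)
  have good: "AE t in \<nu> x. t \<in> L" if h: "indicator {0..1} x * H x = 0" and x: "x \<in> {0..1}" for x
  proof -
    from h x have h0: "H x = 0" by simp
    have P: "prob_space (\<nu> x)" using ym[OF \<nu> x] by simp
    have m: "gL L \<in> borel_measurable (\<nu> x)" by (rule ym_meas[OF \<nu> x bc_meas[OF gL_bc]])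
    have gi: "integrable (\<nu> x) (gL L)" by (rule prob_int_bound(2)[OF P m]) (use gL_01 in auto)
    have "AE t in \<nu> x. gL L t = 0"
    proof -
      have nn: "AE t in \<nu> x. 0 \<le> gL L t" using gL_01 by simp
      have "integral\<^sup>L (\<nu> x) (gL L) = 0" using h0 unfolding H_def .
      then show ?thesis using integral_nonneg_eq_0_iff_AE[OF gi nn] by simp
    qed
    then show "AE t in \<nu> x. t \<in> L" by eventually_elim (simp add: gL_zero[OF L])
  qed
  show ?thesis using ae by eventually_elim (use good in blast)
qed

lemma youngX_of_good:
  assumes L: "finite L" and \<nu>: "young_measure \<nu>"
    and good: "AE x in lborel. x \<in> {0..1} \<longrightarrow> (AE t in \<nu> x. t \<in> L)"
  shows "young_X L \<nu>"
proof -
  have em: "emeasure (\<nu> x) (UNIV - L) = 0" if x: "x \<in> {0..1}" and ae: "AE t in \<nu> x. t \<in> L" for x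
  proof -
    have S: "sets (\<nu> x) = sets borel" using ym[OF \<nu> x] by simp
    have sp: "space (\<nu> x) = UNIV" using sets_eq_imp_space_eq[OF S] by simp
    have Ls: "UNIV - L \<in> sets (\<nu> x)"
      using L S by (simp add: open_Diff finite_imp_closed)
    show ?thesis using AE_iff_measurable[OF Ls, of "\<lambda>t. t \<in> L"] ae sp by auto
  qed
  then have "AE x in lborel. x \<in> {0..1} \<longrightarrow> emeasure (\<nu> x) (UNIV - L) = 0"
    using good by eventually_elim (use em in blast)
  then have "AE x in lebesgue. x \<in> {0..1} \<longrightarrow> emeasure (\<nu> x) (UNIV - L) = 0"
    by (rule AE_completion)
  then show ?thesis unfolding young_X_def using \<nu> by simp
qed

lemma theta_exists:
  assumes L: "finite L" "L \<noteq> {}" and \<nu>: "young_measure \<nu>"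
    and good: "AE x in lborel. x \<in> {0..1} \<longrightarrow> (AE t in \<nu> x. t \<in> L)"
  shows "\<exists>\<theta>. theta_rep L \<nu> \<theta>"
proof -
  define T where "T l x = (\<integral>t. bump L l t \<partial>\<nu> x)" for l x
  define \<theta> where "\<theta> l x = (if (\<Sum>m\<in>L. T m x) = 1 then T l x else 1 / real (card L))" for l x
  have Tm[measurable]: "T l \<in> borel_measurable (restrict_space lebesgue {0..1})" for l
    unfolding T_def using \<nu>[unfolded young_measure_def] bump_bc[OF L(1), of l] by blast
  have cL: "0 < card L" using L by (simp add: card_gt_0_iff)
  have disc: "(\<forall>l\<in>L. \<theta> l x = measure (\<nu> x) {l}) \<and> (\<forall>A\<in>sets borel. measure (\<nu> x) A = (\<Sum>l\<in>L. \<theta> l x * indicator A l))"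
    if x: "x \<in> {0..1}" and ae: "AE t in \<nu> x. t \<in> L" for x
  proof -
    have P: "prob_space (\<nu> x)" and S: "sets (\<nu> x) = sets borel" using ym[OF \<nu> x] by auto
    interpret P: prob_space "\<nu> x" by (rule P)
    have Tl: "T l x = measure (\<nu> x) {l}" if l: "l \<in> L" for l
    proof -
      have "T l x = (\<Sum>m\<in>L. bump L l m * measure (\<nu> x) {m})"
        unfolding T_def by (rule int_disc[OF P S ae L(1) bc_meas[OF bump_bc[OF L(1)]]])
      also have "\<dots> = (\<Sum>m\<in>L. if l = m then measure (\<nu> x) {m} else 0)"
        by (rule sum.cong) (use l L in \<open>auto simp: bump_L\<close>)
      also have "\<dots> = measure (\<nu> x) {l}" using L l by (simp add: sum.delta)
      finally show ?thesis .
    qed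
    have one: "(\<Sum>m\<in>L. measure (\<nu> x) {m}) = 1"
    proof -
      have "(\<integral>t. 1 \<partial>\<nu> x) = (\<Sum>m\<in>L. 1 * measure (\<nu> x) {m})"
        by (rule int_disc[OF P S ae L(1)]) simp
      then show ?thesis by (simp add: P.prob_space)
    qed
    have th: "\<theta> l x = measure (\<nu> x) {l}" if "l \<in> L" for l
    proof -
      have "(\<Sum>m\<in>L. T m x) = 1" using one Tl by simp
      then show ?thesis unfolding \<theta>_def using Tl[OF that] by simp
    qed
    have meas: "measure (\<nu> x) A = (\<Sum>l\<in>L. \<theta> l x * indicator A l)" if A: "A \<in> sets borel" for A
    proof -
      have sp: "space (\<nu> x) = UNIV" using sets_eq_imp_space_eq[OF S] by simp
      have "measure (\<nu> x) A = (\<integral>t. indicator A t \<partial>\<nu> x)" by (simp add: sp)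
      also have "\<dots> = (\<Sum>l\<in>L. indicator A l * measure (\<nu> x) {l})"
        by (rule int_disc[OF P S ae L(1)]) (use A in simp)
      also have "\<dots> = (\<Sum>l\<in>L. \<theta> l x * indicator A l)"
        by (rule sum.cong) (simp_all add: th)
      finally show ?thesis .
    qed
    show ?thesis using th meas by blast
  qed
  have "theta_rep L \<nu> \<theta>" unfolding theta_rep_def
  proof (intro conjI ballI)
    fix l assume l: "l \<in> L"
    show "\<theta> l \<in> borel_measurable (restrict_space lebesgue {0..1})" unfolding \<theta>_def by measurable
  next
    fix l and x :: real assume "l \<in> L" "x \<in> {0..1}"
    have "0 \<le> T l x" unfolding T_def by (rule Bochner_Integration.integral_nonneg) (use bump_01[OF L(1)] in auto)
    then show "0 \<le> \<theta> l x" unfolding \<theta>_def by simp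
  next
    fix x :: real assume "x \<in> {0..1}"
    show "(\<Sum>l\<in>L. \<theta> l x) = 1"
    proof (cases "(\<Sum>m\<in>L. T m x) = 1")
      case True then show ?thesis unfolding \<theta>_def by simp
    next
      case False then show ?thesis unfolding \<theta>_def using cL by simp
    qed
  next
    have "AE x in lborel. x \<in> {0..1} \<longrightarrow>
        (\<forall>A \<in> sets (borel :: real measure). measure (\<nu> x) A = (\<Sum>l\<in>L. \<theta> l x * indicator A l))"
      using good by eventually_elim (use disc in blast)
    then show "AE x in lebesgue. x \<in> {0..1} \<longrightarrow>
        (\<forall>A \<in> sets (borel :: real measure). measure (\<nu> x) A = (\<Sum>l\<in>L. \<theta> l x * indicator A l))"
      by (rule AE_completion)
  qed
  then show ?thesis by blast
qed

abbreviation Qs :: "(real \<times> real) set" where "Qs \<equiv> {0..1} \<times> {0..1}"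

definition Wv :: "(real \<Rightarrow> real \<Rightarrow> real) \<Rightarrow> real \<times> real \<Rightarrow> real" where
  "Wv W = bvs Qs 1 (\<lambda>z. indicator Qs z * W (fst z) (snd z))"

definition tv :: "(real \<Rightarrow> real) \<Rightarrow> real \<Rightarrow> real" where
  "tv \<theta> = bvs {0..1} 1 (\<lambda>x. indicator {0..1} x * \<theta> x)"

lemma Qs_sets[simp]: "Qs \<in> sets (borel :: (real\<times>real) measure)"
  by (intro borel_closed closed_Times) auto

lemma Qs_lsets[simp]: "Qs \<in> sets (lebesgue :: (real\<times>real) measure)"
  by (rule sets_completionI_sets) (use Qs_sets in simp)

lemma Qs_fin: "emeasure (lborel :: (real\<times>real) measure) Qs < \<infinity>"
proof -
  have "cbox (0::real,0::real) (1,1) = Qs" by (subst cbox_Pair_eq) (simp add: cbox_interval)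
  then show ?thesis using emeasure_lborel_cbox_finite[of "(0::real,0::real)" "(1,1)"] by simp
qed

lemma Qs_int[simp]: "integrable (lborel :: (real\<times>real) measure) (indicator Qs :: _ \<Rightarrow> real)"
proof (rule integrable_real_indicator)
  show "Qs \<in> sets lborel" by (simp only: sets_lborel Qs_sets)
qed (rule Qs_fin)

lemma Qs_lint[simp]: "integrable (lebesgue :: (real\<times>real) measure) (indicator Qs :: _ \<Rightarrow> real)"
proof -
  have "(indicator Qs :: _ \<Rightarrow> real) \<in> borel_measurable lborel"
    by (rule borel_measurable_indicator) (simp only: sets_lborel Qs_sets)
  then show ?thesis using Qs_int integrable_completion[of "indicator Qs :: _ \<Rightarrow> real" lborel] by blast
qed

lemma Wv:
  assumes W: "graphon0 W"
  shows "Wv W \<in> borel_measurable borel" "\<And>x y. \<bar>Wv W (x,y)\<bar> \<le> indicator {0..1} x * indicator {0..1} y"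
    "AE z in lborel. indicator Qs z * W (fst z) (snd z) = Wv W z"
proof -
  have m: "(\<lambda>z. indicator Qs z * W (fst z) (snd z)) \<in> borel_measurable lebesgue"
  proof -
    have "(\<lambda>z::real\<times>real. W (fst z) (snd z)) \<in> borel_measurable (restrict_space lebesgue Qs)"
      using W unfolding graphon0_def graphon_def by blast
    then show ?thesis by (subst (asm) borel_measurable_restrict_space_iff) auto
  qed
  have b: "\<bar>indicator Qs z * W (fst z) (snd z)\<bar> \<le> 1" for z
    using W unfolding graphon0_def by (cases z) (auto simp: indicator_def)
  note B = bvs[OF m Qs_sets b]
  show "Wv W \<in> borel_measurable borel" unfolding Wv_def by (rule B(1)) simp
  show "AE z in lborel. indicator Qs z * W (fst z) (snd z) = Wv W z" unfolding Wv_def by (rule B(4)) simp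
  show "\<bar>Wv W (x,y)\<bar> \<le> indicator {0..1} x * indicator {0..1} y" for x y
  proof (cases "(x,y) \<in> Qs")
    case True then show ?thesis using B(2)[of "(x,y)"] unfolding Wv_def by simp
  next
    case False then show ?thesis using B(3)[of "(x,y)"] unfolding Wv_def by simp
  qed
qed

lemma tv:
  assumes m: "\<theta> \<in> borel_measurable (restrict_space lebesgue {0..1})" and b: "\<forall>x\<in>{0..1}. \<bar>\<theta> x\<bar> \<le> 1"
  shows "tv \<theta> \<in> borel_measurable borel" "\<And>x. \<bar>tv \<theta> x\<bar> \<le> 1" "\<And>x. x \<notin> {0..1} \<Longrightarrow> tv \<theta> x = 0"
    "AE x in lborel. indicator {0..1} x * \<theta> x = tv \<theta> x"
proof -
  have m': "(\<lambda>x. indicator {0..1} x * \<theta> x) \<in> borel_measurable lebesgue"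
    using m by (subst (asm) borel_measurable_restrict_space_iff) auto
  have b': "\<bar>indicator {0..1} x * \<theta> x\<bar> \<le> 1" for x using b by (auto simp: indicator_def)
  note B = bvs[OF m' _ b']
  show "tv \<theta> \<in> borel_measurable borel" unfolding tv_def by (rule B(1)) auto
  show "\<bar>tv \<theta> x\<bar> \<le> 1" for x unfolding tv_def by (rule B(2)) auto
  show "x \<notin> {0..1} \<Longrightarrow> tv \<theta> x = 0" for x unfolding tv_def by (rule B(3)) auto
  show "AE x in lborel. indicator {0..1} x * \<theta> x = tv \<theta> x" unfolding tv_def by (rule B(4)) auto
qed

lemma bm_fst: "g \<in> borel_measurable borel \<Longrightarrow> (\<lambda>z::real\<times>real. g (fst z)) \<in> borel_measurable borel"
  by (rule measurable_compose[of fst, OF borel_measurable_continuous_onI]) (auto intro: continuous_intros)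

lemma bm_snd: "g \<in> borel_measurable borel \<Longrightarrow> (\<lambda>z::real\<times>real. g (snd z)) \<in> borel_measurable borel"
  by (rule measurable_compose[of snd, OF borel_measurable_continuous_onI]) (auto intro: continuous_intros)

lemma Wtt:
  assumes W: "graphon0 W"
    and m1: "\<theta>1 \<in> borel_measurable (restrict_space lebesgue {0..1})" and b1: "\<forall>x\<in>{0..1}. \<bar>\<theta>1 x\<bar> \<le> 1"
    and m2: "\<theta>2 \<in> borel_measurable (restrict_space lebesgue {0..1})" and b2: "\<forall>x\<in>{0..1}. \<bar>\<theta>2 x\<bar> \<le> 1"
  shows "(LINT z : Qs | lebesgue. W (fst z) (snd z) * \<theta>1 (fst z) * \<theta>2 (snd z))
       = (\<integral>z. Wv W z * tv \<theta>1 (fst z) * tv \<theta>2 (snd z) \<partial>lborel)"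
proof -
  note T1 = tv[OF m1 b1] and T2 = tv[OF m2 b2] and WW = Wv[OF W]
  have gm: "(\<lambda>z. Wv W z * tv \<theta>1 (fst z) * tv \<theta>2 (snd z)) \<in> borel_measurable borel"
    using WW(1) bm_fst[OF T1(1)] bm_snd[OF T2(1)] by measurable
  have ae: "AE z in lborel. indicator Qs z *\<^sub>R (W (fst z) (snd z) * \<theta>1 (fst z) * \<theta>2 (snd z))
      = Wv W z * tv \<theta>1 (fst z) * tv \<theta>2 (snd z)"
    using WW(3) AE_fst[OF T1(4)] AE_snd[OF T2(4)]
  proof eventually_elim
    case (elim z)
    obtain x y where z: "z = (x,y)" by (cases z)
    show ?case using elim unfolding z by (auto simp: indicator_def)
  qed
  show ?thesis unfolding set_lebesgue_integral_def by (rule leb2lborel(1)[OF ae gm])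
qed

lemma Wcd_int:
  assumes W: "graphon0 W" and c: "c \<in> borel_measurable borel" "\<And>x. \<bar>c x\<bar> \<le> 1"
    and d: "d \<in> borel_measurable borel" "\<And>x. \<bar>d x\<bar> \<le> 1"
  shows "integrable lborel (\<lambda>z. Wv W z * c (fst z) * d (snd z))"
proof (rule Bochner_Integration.integrable_bound[OF Qs_int])
  note WW = Wv[OF W]
  show "(\<lambda>z. Wv W z * c (fst z) * d (snd z)) \<in> borel_measurable lborel"
    using WW(1) bm_fst[OF c(1)] bm_snd[OF d(1)] by simp
  show "AE z in lborel. norm (Wv W z * c (fst z) * d (snd z)) \<le> norm (indicator Qs z :: real)"
  proof (intro AE_I2)
    fix z :: "real \<times> real"
    obtain x y where z: "z = (x,y)" by (cases z)
    have "\<bar>Wv W (x,y) * c x * d y\<bar> = \<bar>Wv W (x,y)\<bar> * \<bar>c x\<bar> * \<bar>d y\<bar>" by (simp add: abs_mult)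
    also have "\<dots> \<le> (indicator {0..1} x * indicator {0..1} y) * 1 * 1"
      using WW(2)[of x y] c(2)[of x] d(2)[of y] by (intro mult_mono) auto
    also have "\<dots> = indicator Qs z" by (simp add: z indicator_def)
    finally show "norm (Wv W z * c (fst z) * d (snd z)) \<le> norm (indicator Qs z :: real)" by (simp add: z)
  qed
qed

lemma sumint:
  fixes g :: "real \<Rightarrow> real \<Rightarrow> 'a \<Rightarrow> real"
  assumes L: "finite L" and i: "\<And>h k. h \<in> L \<Longrightarrow> k \<in> L \<Longrightarrow> integrable M (g h k)"
  shows "(\<integral>z. (\<Sum>h\<in>L. \<Sum>k\<in>L. c h k * g h k z) \<partial>M) = (\<Sum>h\<in>L. \<Sum>k\<in>L. c h k * integral\<^sup>L M (g h k))"
proof -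
  have i2: "integrable M (\<lambda>z. \<Sum>k\<in>L. c h k * g h k z)" if "h \<in> L" for h
    using i that by (intro Bochner_Integration.integrable_sum integrable_mult_right) auto
  have "(\<integral>z. (\<Sum>h\<in>L. \<Sum>k\<in>L. c h k * g h k z) \<partial>M) = (\<Sum>h\<in>L. \<integral>z. (\<Sum>k\<in>L. c h k * g h k z) \<partial>M)"
    using i2 by (rule Bochner_Integration.integral_sum)
  also have "\<dots> = (\<Sum>h\<in>L. \<Sum>k\<in>L. c h k * integral\<^sup>L M (g h k))"
  proof (rule sum.cong[OF refl])
    fix h assume h: "h \<in> L"
    have "(\<integral>z. (\<Sum>k\<in>L. c h k * g h k z) \<partial>M) = (\<Sum>k\<in>L. \<integral>z. c h k * g h k z \<partial>M)"
      using i h by (intro Bochner_Integration.integral_sum integrable_mult_right) auto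
    then show "(\<integral>z. (\<Sum>k\<in>L. c h k * g h k z) \<partial>M) = (\<Sum>k\<in>L. c h k * integral\<^sup>L M (g h k))" by simp
  qed
  finally show ?thesis .
qed

lemma rep_props:
  assumes r: "theta_rep L \<nu> \<theta>" and L: "finite L" and l: "l \<in> L"
  shows "\<theta> l \<in> borel_measurable (restrict_space lebesgue {0..1})" "\<forall>x\<in>{0..1}. \<bar>\<theta> l x\<bar> \<le> 1"
proof -
  show "\<theta> l \<in> borel_measurable (restrict_space lebesgue {0..1})" using r l unfolding theta_rep_def by blast
  show "\<forall>x\<in>{0..1}. \<bar>\<theta> l x\<bar> \<le> 1"
  proof
    fix x :: real assume x: "x \<in> {0..1}"
    have nn: "\<forall>m\<in>L. 0 \<le> \<theta> m x" using r x unfolding theta_rep_def by blast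
    have s: "(\<Sum>m\<in>L. \<theta> m x) = 1" using r x unfolding theta_rep_def by blast
    have "\<theta> l x \<le> (\<Sum>m\<in>L. \<theta> m x)" by (rule member_le_sum) (use L l nn in auto)
    then show "\<bar>\<theta> l x\<bar> \<le> 1" using s nn l by simp
  qed
qed

lemma rhs_eq:
  fixes f :: "real \<Rightarrow> real \<Rightarrow> real"
  assumes L: "finite L" and \<nu>: "young_measure \<nu>" and r: "theta_rep L \<nu> \<theta>" and W: "graphon0 W"
  shows "(LINT z : Qs | lebesgue. W (fst z) (snd z) *
              (\<integral>p. (if fst p \<in> L \<and> snd p \<in> L then f (fst p) (snd p) else 0)
                  \<partial>(\<nu> (fst z) \<Otimes>\<^sub>M \<nu> (snd z))))
       = (\<Sum>h\<in>L. \<Sum>k\<in>L. f h k * (LINT z : Qs | lebesgue. W (fst z) (snd z) * \<theta> h (fst z) * \<theta> k (snd z)))"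
proof -
  note RP = rep_props[OF r L]
  note WW = Wv[OF W]
  have tvm[measurable]: "tv (\<theta> h) \<in> borel_measurable borel" if "h \<in> L" for h using tv(1)[OF RP[OF that]] .
  have tvb: "\<bar>tv (\<theta> h) x\<bar> \<le> 1" if "h \<in> L" for h x using tv(2)[OF RP[OF that]] .
  have aet: "AE x in lborel. \<forall>h\<in>L. indicator {0..1} x * \<theta> h x = tv (\<theta> h) x"
    by (rule AE_finite_allI[OF L]) (rule tv(4)[OF RP])
  have G: "AE x in lborel. (x \<in> {0..1} \<longrightarrow> (\<forall>l\<in>L. measure (\<nu> x) {l} = \<theta> l x)) \<and>
                           (\<forall>h\<in>L. indicator {0..1} x * \<theta> h x = tv (\<theta> h) x)"
    using disc_of_rep[OF \<nu> r L] aet by eventually_elim blast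
  define F where "F z = (\<Sum>h\<in>L. \<Sum>k\<in>L. f h k * (Wv W z * tv (\<theta> h) (fst z) * tv (\<theta> k) (snd z)))" for z
  have Fm: "F \<in> borel_measurable borel"
  proof -
    have "(\<lambda>z. Wv W z * tv (\<theta> h) (fst z) * tv (\<theta> k) (snd z)) \<in> borel_measurable borel" if "h \<in> L" "k \<in> L" for h k
      using WW(1) bm_fst[OF tvm[OF that(1)]] bm_snd[OF tvm[OF that(2)]] by measurable
    note mm = this
    show ?thesis unfolding F_def
      by (intro borel_measurable_sum) (rule borel_measurable_times[OF borel_measurable_const mm], blast+)
  qed
  have ae: "AE z in lborel. indicator Qs z *\<^sub>R (W (fst z) (snd z) *
              (\<integral>p. (if fst p \<in> L \<and> snd p \<in> L then f (fst p) (snd p) else 0)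
                  \<partial>(\<nu> (fst z) \<Otimes>\<^sub>M \<nu> (snd z)))) = F z"
    using AE_fst[OF G] AE_snd[OF G] WW(3)
  proof eventually_elim
    case (elim z)
    obtain x y where z: "z = (x,y)" by (cases z)
    show ?case
    proof (cases "z \<in> Qs")
      case True
      then have x: "x \<in> {0..1}" and y: "y \<in> {0..1}" by (auto simp: z)
      have Px: "prob_space (\<nu> x)" "sets (\<nu> x) = sets borel" using ym[OF \<nu> x] by auto
      have Py: "prob_space (\<nu> y)" "sets (\<nu> y) = sets borel" using ym[OF \<nu> y] by auto
      have mx: "\<forall>l\<in>L. measure (\<nu> x) {l} = \<theta> l x" and tx: "\<forall>h\<in>L. \<theta> h x = tv (\<theta> h) x"
        using elim x by (auto simp: z)
      have my: "\<forall>l\<in>L. measure (\<nu> y) {l} = \<theta> l y" and ty: "\<forall>h\<in>L. \<theta> h y = tv (\<theta> h) y"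
        using elim y by (auto simp: z)
      have wz: "Wv W (x,y) = W x y" using elim True by (simp add: z)
      have "(\<integral>p. (if fst p \<in> L \<and> snd p \<in> L then f (fst p) (snd p) else 0) \<partial>(\<nu> x \<Otimes>\<^sub>M \<nu> y))
          = (\<Sum>h\<in>L. \<Sum>k\<in>L. f h k * (measure (\<nu> x) {h} * measure (\<nu> y) {k}))"
        by (rule prod_disc[OF Px(1) Py(1) Px(2) Py(2) L])
      also have "\<dots> = (\<Sum>h\<in>L. \<Sum>k\<in>L. f h k * (tv (\<theta> h) x * tv (\<theta> k) y))"
        by (intro sum.cong refl) (simp add: mx my tx ty)
      finally have e: "(\<integral>p. (if fst p \<in> L \<and> snd p \<in> L then f (fst p) (snd p) else 0) \<partial>(\<nu> x \<Otimes>\<^sub>M \<nu> y))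
          = (\<Sum>h\<in>L. \<Sum>k\<in>L. f h k * (tv (\<theta> h) x * tv (\<theta> k) y))" .
      show ?thesis unfolding F_def using True
        by (simp add: z e wz sum_distrib_left mult_ac)
    next
      case False
      have "Wv W z = 0" using elim False by simp
      then show ?thesis unfolding F_def using False by simp
    qed
  qed
  have "(LINT z : Qs | lebesgue. W (fst z) (snd z) *
              (\<integral>p. (if fst p \<in> L \<and> snd p \<in> L then f (fst p) (snd p) else 0)
                  \<partial>(\<nu> (fst z) \<Otimes>\<^sub>M \<nu> (snd z)))) = (\<integral>z. F z \<partial>lborel)"
    unfolding set_lebesgue_integral_def by (rule leb2lborel(1)[OF ae Fm])
  also have "\<dots> = (\<Sum>h\<in>L. \<Sum>k\<in>L. f h k * (\<integral>z. Wv W z * tv (\<theta> h) (fst z) * tv (\<theta> k) (snd z) \<partial>lborel))"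
    unfolding F_def
    by (rule sumint[OF L, where g="\<lambda>h k z. Wv W z * tv (\<theta> h) (fst z) * tv (\<theta> k) (snd z)"])
       (intro Wcd_int[OF W]; use tvm tvb in auto)
  also have "\<dots> = (\<Sum>h\<in>L. \<Sum>k\<in>L. f h k * (LINT z : Qs | lebesgue. W (fst z) (snd z) * \<theta> h (fst z) * \<theta> k (snd z)))"
    by (intro sum.cong refl arg_cong2[where f="(*)"] Wtt[OF W, symmetric] RP)
  finally show ?thesis .
qed

lemma cut_bound:
  assumes W1: "graphon0 W1" and W2: "graphon0 W2"
    and S: "S \<in> sets lebesgue" "S \<subseteq> {0..1}" and T: "T \<in> sets lebesgue" "T \<subseteq> {0..1}"
  shows "\<bar>LINT z : S \<times> T | (lebesgue :: (real\<times>real) measure). W1 (fst z) (snd z) - W2 (fst z) (snd z)\<bar>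
      \<le> cut_norm (\<lambda>x y. W1 x y - W2 x y)"
proof -
  define M :: real where "M = (\<integral>z. indicator Qs z \<partial>(lebesgue::(real\<times>real) measure))"
  have bd: "\<bar>LINT z : A \<times> B | (lebesgue :: (real\<times>real) measure). W1 (fst z) (snd z) - W2 (fst z) (snd z)\<bar> \<le> M"
    if AB: "A \<subseteq> {0..1}" "B \<subseteq> {0..1}" for A B
  proof (cases "integrable lebesgue (\<lambda>z. indicator (A \<times> B) z *\<^sub>R (W1 (fst z) (snd z) - W2 (fst z) (snd z)))")
    case True
    have pb: "\<bar>indicator (A \<times> B) z *\<^sub>R (W1 (fst z) (snd z) - W2 (fst z) (snd z))\<bar> \<le> indicator Qs z" for z
    proof (cases "z \<in> A \<times> B")
      case True
      then have zq: "z \<in> Qs" using AB by auto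
      then have "0 \<le> W1 (fst z) (snd z) \<and> W1 (fst z) (snd z) \<le> 1 \<and> 0 \<le> W2 (fst z) (snd z) \<and> W2 (fst z) (snd z) \<le> 1"
        using W1 W2 unfolding graphon0_def by (auto simp: mem_Times_iff)
      then show ?thesis using True zq by (auto simp: abs_le_iff)
    qed simp
    show ?thesis unfolding set_lebesgue_integral_def M_def
      by (rule integral_abs_bound_integral[OF True Qs_lint pb])
  next
    case False
    have "0 \<le> M" unfolding M_def by (rule Bochner_Integration.integral_nonneg) simp
    then show ?thesis unfolding set_lebesgue_integral_def using not_integrable_integral_eq[OF False] by simp
  qed
  define FF where "FF = (\<lambda>ST. \<bar>LINT z : fst ST \<times> snd ST | (lebesgue :: (real\<times>real) measure). W1 (fst z) (snd z) - W2 (fst z) (snd z)\<bar>)"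
  define IS where "IS = {(S::real set, T::real set). S \<in> sets lebesgue \<and> T \<in> sets lebesgue \<and> S \<subseteq> {0..1} \<and> T \<subseteq> {0..1}}"
  have "FF (S,T) \<le> Sup (FF ` IS)"
  proof (rule cSUP_upper)
    show "(S, T) \<in> IS" using S T by (simp add: IS_def)
    show "bdd_above (FF ` IS)"
      by (rule bdd_aboveI2[where M=M]) (use bd in \<open>auto simp: FF_def IS_def\<close>)
  qed
  then show ?thesis unfolding cut_norm_def FF_def IS_def by simp
qed

lemma dsum:
  fixes f :: "real \<Rightarrow> real \<Rightarrow> real"
  assumes L: "finite L" and a: "a \<in> L" and b: "b \<in> L"
  shows "(\<Sum>h\<in>L. \<Sum>k\<in>L. f h k * (c * (if a = h then 1 else 0) * (if b = k then 1 else 0))) = c * f a b"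
proof -
  have "(\<Sum>h\<in>L. \<Sum>k\<in>L. f h k * (c * (if a = h then 1 else 0) * (if b = k then 1 else 0)))
      = (\<Sum>h\<in>L. if a = h then (\<Sum>k\<in>L. if b = k then c * f h k else 0) else 0)"
    by (rule sum.cong[OF refl]) (auto intro!: sum.cong)
  also have "\<dots> = c * f a b" using L a b by (simp add: sum.delta)
  finally show ?thesis .
qed

lemma bu:
  assumes um: "u \<in> borel_measurable (restrict_space lebesgue {0..1})" and L: "finite L"
  shows "(\<lambda>x. bump L h (u x)) \<in> borel_measurable (restrict_space lebesgue {0..1})" "\<forall>x\<in>{0..1}. \<bar>bump L h (u x)\<bar> \<le> 1"
proof -
  show "(\<lambda>x. bump L h (u x)) \<in> borel_measurable (restrict_space lebesgue {0..1})"
    by (rule measurable_compose[OF um bc_meas[OF bump_bc[OF L]]])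
  show "\<forall>x\<in>{0..1}. \<bar>bump L h (u x)\<bar> \<le> 1" using bump_01[OF L] by auto
qed

lemma weak_a:
  fixes u :: "nat \<Rightarrow> real \<Rightarrow> real"
  assumes L: "finite L" and \<nu>: "young_measure \<nu>" and r: "theta_rep L \<nu> \<theta>" and h: "h \<in> L"
    and um: "\<And>n. u n \<in> borel_measurable (restrict_space lebesgue {0..1})"
    and conv: "narrow_conv (\<lambda>n x. return borel (u n x)) \<nu>"
    and \<phi>m: "\<phi> \<in> borel_measurable borel" and \<phi>i: "integrable lborel (\<lambda>x. indicator {0..1} x * \<phi> x)"
  shows "(\<lambda>n. \<integral>x. indicator {0..1} x * \<phi> x * tv (\<lambda>x. bump L h (u n x)) x \<partial>lborel)
     \<longlonglongrightarrow> (\<integral>x. indicator {0..1} x * \<phi> x * tv (\<theta> h) x \<partial>lborel)"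
proof -
  note [measurable] = \<phi>m
  have si: "set_integrable lebesgue {0..1} \<phi>"
    unfolding set_integrable_def using \<phi>i integrable_completion[of "\<lambda>x. indicator {0..1} x * \<phi> x" lborel]
    by simp
  have ws: "weak_star_Linf (\<lambda>n x. \<integral>t. bump L h t \<partial>return borel (u n x)) (\<lambda>x. \<integral>t. bump L h t \<partial>\<nu> x)"
    by (rule conv[unfolded narrow_conv_def, rule_format, OF bump_bc[OF L]])
  have lim: "(\<lambda>n. LINT x : {0..1} | lebesgue. \<phi> x * (\<integral>t. bump L h t \<partial>return borel (u n x)))
      \<longlonglongrightarrow> (LINT x : {0..1} | lebesgue. \<phi> x * (\<integral>t. bump L h t \<partial>\<nu> x))"
    by (rule ws[unfolded weak_star_Linf_def, rule_format, OF si])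
  have eq1: "(LINT x : {0..1} | lebesgue. \<phi> x * (\<integral>t. bump L h t \<partial>return borel (u n x)))
      = (\<integral>x. indicator {0..1} x * \<phi> x * tv (\<lambda>x. bump L h (u n x)) x \<partial>lborel)" for n
  proof -
    note T = tv[OF bu[OF um[of n] L, where h=h]]
    have gm: "(\<lambda>x. indicator {0..1} x * \<phi> x * tv (\<lambda>x. bump L h (u n x)) x) \<in> borel_measurable borel"
      using T(1) by measurable
    have ae: "AE x in lborel. indicator {0..1} x *\<^sub>R (\<phi> x * (\<integral>t. bump L h t \<partial>return borel (u n x)))
        = indicator {0..1} x * \<phi> x * tv (\<lambda>x. bump L h (u n x)) x"
      using T(4)
    proof eventually_elim
      case (elim x)
      show ?case
      proof (cases "x \<in> {0..1}")
        case True
        have "(\<integral>t. bump L h t \<partial>return borel (u n x)) = bump L h (u n x)"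
          by (rule integral_return) (auto intro: bc_meas bump_bc L)
        then show ?thesis using elim True by simp
      qed simp
    qed
    show ?thesis unfolding set_lebesgue_integral_def by (rule leb2lborel(1)[OF ae gm])
  qed
  have eq2: "(LINT x : {0..1} | lebesgue. \<phi> x * (\<integral>t. bump L h t \<partial>\<nu> x))
      = (\<integral>x. indicator {0..1} x * \<phi> x * tv (\<theta> h) x \<partial>lborel)"
  proof -
    note T = tv[OF rep_props[OF r L h]]
    have gm: "(\<lambda>x. indicator {0..1} x * \<phi> x * tv (\<theta> h) x) \<in> borel_measurable borel"
      using T(1) by measurable
    have ae: "AE x in lborel. indicator {0..1} x *\<^sub>R (\<phi> x * (\<integral>t. bump L h t \<partial>\<nu> x))
        = indicator {0..1} x * \<phi> x * tv (\<theta> h) x"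
      using T(4) disc_of_rep[OF \<nu> r L]
    proof eventually_elim
      case (elim x)
      show ?case
      proof (cases "x \<in> {0..1}")
        case True
        have P: "prob_space (\<nu> x)" "sets (\<nu> x) = sets borel" using ym[OF \<nu> True] by auto
        have ae: "AE t in \<nu> x. t \<in> L" and ms: "\<forall>l\<in>L. measure (\<nu> x) {l} = \<theta> l x" using elim True by auto
        have "(\<integral>t. bump L h t \<partial>\<nu> x) = (\<Sum>m\<in>L. bump L h m * measure (\<nu> x) {m})"
          by (rule int_disc[OF P(1) P(2) ae L bc_meas[OF bump_bc[OF L]]])
        also have "\<dots> = (\<Sum>m\<in>L. if h = m then measure (\<nu> x) {m} else 0)"
          by (rule sum.cong) (use h L in \<open>auto simp: bump_L\<close>)
        also have "\<dots> = \<theta> h x" using L h ms by (simp add: sum.delta)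
        finally show ?thesis using elim True by simp
      qed simp
    qed
    show ?thesis unfolding set_lebesgue_integral_def by (rule leb2lborel(1)[OF ae gm])
  qed
  show ?thesis using lim unfolding eq1 eq2 .
qed

theorem lemma11:
  fixes L :: "real set" and f :: "real \<Rightarrow> real \<Rightarrow> real"
    and W :: "real \<Rightarrow> real \<Rightarrow> real" and Wn :: "nat \<Rightarrow> real \<Rightarrow> real \<Rightarrow> real"
    and u :: "nat \<Rightarrow> real \<Rightarrow> real" and \<nu> :: "real \<Rightarrow> real measure"
  assumes L: "finite L" "L \<noteq> {}"
    and W: "graphon0 W" and Wn: "\<And>n. graphon0 (Wn n)"
    and cut: "(\<lambda>n. cut_norm (\<lambda>x y. Wn n x y - W x y)) \<longlonglongrightarrow> 0"
    and u: "\<And>n. in_Xn L n (u n)"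
    and \<nu>: "young_measure \<nu>"
    and conv: "narrow_conv (\<lambda>n x. return borel (u n x)) \<nu>"
  shows "young_X L \<nu>
    \<and> (\<exists>\<theta>. theta_rep L \<nu> \<theta>)
    \<and> (\<lambda>n. LINT z : {0..1}\<times>{0..1} | (lebesgue :: (real\<times>real) measure).
            Wn n (fst z) (snd z) * f (u n (fst z)) (u n (snd z)))
        \<longlonglongrightarrow> (LINT z : {0..1}\<times>{0..1} | (lebesgue :: (real\<times>real) measure).
            W (fst z) (snd z) *
              (\<integral>p. (if fst p \<in> L \<and> snd p \<in> L then f (fst p) (snd p) else 0)
                  \<partial>(\<nu> (fst z) \<Otimes>\<^sub>M \<nu> (snd z))))
    \<and> (\<forall>\<theta>. theta_rep L \<nu> \<theta> \<longrightarrow>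
         (LINT z : {0..1}\<times>{0..1} | (lebesgue :: (real\<times>real) measure).
            W (fst z) (snd z) *
              (\<integral>p. (if fst p \<in> L \<and> snd p \<in> L then f (fst p) (snd p) else 0)
                  \<partial>(\<nu> (fst z) \<Otimes>\<^sub>M \<nu> (snd z))))
         = (\<Sum>h\<in>L. \<Sum>k\<in>L. f h k *
              (LINT z : {0..1}\<times>{0..1} | (lebesgue :: (real\<times>real) measure).
                 W (fst z) (snd z) * \<theta> h (fst z) * \<theta> k (snd z))))"
proof -
  have uL: "\<And>n x. x \<in> {0..1} \<Longrightarrow> u n x \<in> L" using u unfolding in_Xn_def by blast
  have um: "\<And>n. u n \<in> borel_measurable (restrict_space lebesgue {0..1})" using u unfolding in_Xn_def by blast
  have good: "AE x in lborel. x \<in> {0..1} \<longrightarrow> (AE t in \<nu> x. t \<in> L)" by (rule good_ae[OF L(1) \<nu> uL conv])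
  have YX: "young_X L \<nu>" by (rule youngX_of_good[OF L(1) \<nu> good])
  obtain \<theta> where r: "theta_rep L \<nu> \<theta>" using theta_exists[OF L \<nu> good] by blast
  note RP = rep_props[OF r L(1)]
  note WW = Wv[OF W]
  define a where "a n h = tv (\<lambda>x. bump L h (u n x))" for n h
  define t where "t h = tv (\<theta> h)" for h
  define J where "J n h k = (\<integral>z. Wv (Wn n) z * a n h (fst z) * a n k (snd z) \<partial>lborel)" for n h k
  define JW where "JW n h k = (\<integral>z. Wv W z * a n h (fst z) * a n k (snd z) \<partial>lborel)" for n h k
  define K where "K h k = (\<integral>z. Wv W z * t h (fst z) * t k (snd z) \<partial>lborel)" for h k
  have am[measurable]: "a n h \<in> borel_measurable borel" for n h
    unfolding a_def by (rule tv(1)[OF bu[OF um[of n] L(1), where h=h]])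
  have ab: "\<bar>a n h x\<bar> \<le> 1" for n h x
    unfolding a_def by (rule tv(2)[OF bu[OF um[of n] L(1), where h=h]])
  have aae: "AE x in lborel. indicator {0..1} x * bump L h (u n x) = a n h x" for n h
    unfolding a_def by (rule tv(4)[OF bu[OF um[of n] L(1), where h=h]])
  have aeall: "AE x in lborel. \<forall>h\<in>L. indicator {0..1} x * bump L h (u n x) = a n h x" for n
    by (rule AE_finite_allI[OF L(1)]) (rule aae)
  have tm[measurable]: "t h \<in> borel_measurable borel" if "h \<in> L" for h
    unfolding t_def by (rule tv(1)[OF RP[OF that]])
  have tb: "\<bar>t h x\<bar> \<le> 1" if "h \<in> L" for h x
    unfolding t_def by (rule tv(2)[OF RP[OF that]])
  have bL: "bump L h (u n x) = (if u n x = h then 1 else 0)" if "h \<in> L" "x \<in> {0..1}" for n h x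
    using bump_L[OF L(1) that(1) uL[OF that(2)]] by simp
  have LHS: "(LINT z : {0..1}\<times>{0..1} | (lebesgue :: (real\<times>real) measure).
            Wn n (fst z) (snd z) * f (u n (fst z)) (u n (snd z))) = (\<Sum>h\<in>L. \<Sum>k\<in>L. f h k * J n h k)" for n
  proof -
    note WWn = Wv[OF Wn[of n]]
    define F where "F z = (\<Sum>h\<in>L. \<Sum>k\<in>L. f h k * (Wv (Wn n) z * a n h (fst z) * a n k (snd z)))" for z
    have Fm: "F \<in> borel_measurable borel"
    proof -
      have mm: "(\<lambda>z. Wv (Wn n) z * a n h (fst z) * a n k (snd z)) \<in> borel_measurable borel" for h k
        using WWn(1) bm_fst[OF am[of n h]] bm_snd[OF am[of n k]] by measurable
      show ?thesis unfolding F_def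
        by (intro borel_measurable_sum) (rule borel_measurable_times[OF borel_measurable_const mm])
    qed
    have ae: "AE z in lborel. indicator Qs z *\<^sub>R (Wn n (fst z) (snd z) * f (u n (fst z)) (u n (snd z))) = F z"
      using AE_fst[OF aeall[of n]] AE_snd[OF aeall[of n]] WWn(3)
    proof eventually_elim
      case (elim z)
      obtain x y where z: "z = (x,y)" by (cases z)
      show ?case
      proof (cases "z \<in> Qs")
        case True
        then have x: "x \<in> {0..1}" and y: "y \<in> {0..1}" by (auto simp: z)
        have ax: "\<forall>h\<in>L. a n h x = (if u n x = h then 1 else 0)" using elim x bL[OF _ x] by (auto simp: z)
        have ay: "\<forall>h\<in>L. a n h y = (if u n y = h then 1 else 0)" using elim y bL[OF _ y] by (auto simp: z)
        have wz: "Wv (Wn n) (x,y) = Wn n x y" using elim True by (simp add: z)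
        have "F z = (\<Sum>h\<in>L. \<Sum>k\<in>L. f h k * (Wn n x y * (if u n x = h then 1 else 0) * (if u n y = k then 1 else 0)))"
          unfolding F_def z by (intro sum.cong refl) (simp add: ax ay wz)
        also have "\<dots> = Wn n x y * f (u n x) (u n y)" by (rule dsum[OF L(1) uL[OF x] uL[OF y]])
        finally show ?thesis using True by (simp add: z)
      next
        case False
        have "Wv (Wn n) z = 0" using elim False by simp
        then show ?thesis unfolding F_def using False by simp
      qed
    qed
    have "(LINT z : Qs | (lebesgue :: (real\<times>real) measure).
            Wn n (fst z) (snd z) * f (u n (fst z)) (u n (snd z))) = (\<integral>z. F z \<partial>lborel)"
      unfolding set_lebesgue_integral_def by (rule leb2lborel(1)[OF ae Fm])
    also have "\<dots> = (\<Sum>h\<in>L. \<Sum>k\<in>L. f h k * J n h k)"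
      unfolding F_def J_def
      by (rule sumint[OF L(1), where g="\<lambda>h k z. Wv (Wn n) z * a n h (fst z) * a n k (snd z)"])
         (intro Wcd_int[OF Wn[of n]]; use am ab in auto)
    finally show ?thesis .
  qed
  have cutb: "\<bar>J n h k - JW n h k\<bar> \<le> cut_norm (\<lambda>x y. Wn n x y - W x y)" if hk: "h \<in> L" "k \<in> L" for n h k
  proof -
    note WWn = Wv[OF Wn[of n]]
    define A where "A = {x \<in> {0..1}. u n x = h}"
    define B where "B = {x \<in> {0..1}. u n x = k}"
    have indA: "indicator A x = indicator {0..1} x * bump L h (u n x)" for x
      using bL[OF hk(1), of x n] unfolding A_def by (cases "x \<in> {0..1}") (auto simp: indicator_def)
    have indB: "indicator B x = indicator {0..1} x * bump L k (u n x)" for x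
      using bL[OF hk(2), of x n] unfolding B_def by (cases "x \<in> {0..1}") (auto simp: indicator_def)
    have lm: "(\<lambda>x. indicator {0..1} x * bump L l (u n x)) \<in> borel_measurable lebesgue" for l
      using bu(1)[OF um[of n] L(1), where h=l] by (subst (asm) borel_measurable_restrict_space_iff) auto
    have Al: "A \<in> sets lebesgue"
    proof -
      have "(indicator A :: real \<Rightarrow> real) \<in> borel_measurable lebesgue" unfolding indA using lm .
      then show ?thesis by (simp add: borel_measurable_indicator_iff)
    qed
    have Bl: "B \<in> sets lebesgue"
    proof -
      have "(indicator B :: real \<Rightarrow> real) \<in> borel_measurable lebesgue" unfolding indB using lm .
      then show ?thesis by (simp add: borel_measurable_indicator_iff)
    qed
    have gm: "(\<lambda>z. Wv (Wn n) z * a n h (fst z) * a n k (snd z) - Wv W z * a n h (fst z) * a n k (snd z)) \<in> borel_measurable borel"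
      using WWn(1) WW(1) bm_fst[OF am[of n h]] bm_snd[OF am[of n k]] by measurable
    have ae: "AE z in lborel. indicator (A \<times> B) z *\<^sub>R (Wn n (fst z) (snd z) - W (fst z) (snd z))
        = Wv (Wn n) z * a n h (fst z) * a n k (snd z) - Wv W z * a n h (fst z) * a n k (snd z)"
      using AE_fst[OF aae[of h n]] AE_snd[OF aae[of k n]] WWn(3) WW(3)
    proof eventually_elim
      case (elim z)
      obtain x y where z: "z = (x,y)" by (cases z)
      have ax: "a n h x = indicator A x" using elim by (simp add: z indA)
      have ay: "a n k y = indicator B y" using elim by (simp add: z indB)
      show ?case
      proof (cases "z \<in> Qs")
        case True
        have "Wv (Wn n) (x,y) = Wn n x y" "Wv W (x,y) = W x y" using elim True by (simp_all add: z)
        then show ?thesis by (simp add: z ax ay indicator_times algebra_simps)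
      next
        case False
        have "Wv (Wn n) z = 0" "Wv W z = 0" using elim False by simp_all
        moreover have "z \<notin> A \<times> B" using False unfolding A_def B_def by auto
        ultimately show ?thesis by simp
      qed
    qed
    have "(LINT z : A \<times> B | (lebesgue :: (real\<times>real) measure). Wn n (fst z) (snd z) - W (fst z) (snd z))
        = (\<integral>z. Wv (Wn n) z * a n h (fst z) * a n k (snd z) - Wv W z * a n h (fst z) * a n k (snd z) \<partial>lborel)"
      unfolding set_lebesgue_integral_def by (rule leb2lborel(1)[OF ae gm])
    also have "\<dots> = J n h k - JW n h k"
      unfolding J_def JW_def
      by (rule Bochner_Integration.integral_diff) (intro Wcd_int[OF Wn[of n]] Wcd_int[OF W]; use am ab in auto)+
    finally have eq: "(LINT z : A \<times> B | (lebesgue :: (real\<times>real) measure). Wn n (fst z) (snd z) - W (fst z) (snd z))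
        = J n h k - JW n h k" .
    have AS: "A \<subseteq> {0..1}" "B \<subseteq> {0..1}" by (auto simp: A_def B_def)
    show ?thesis using cut_bound[OF Wn[of n] W Al AS(1) Bl AS(2)] unfolding eq .
  qed
  have JWc: "(\<lambda>n. JW n h k) \<longlonglongrightarrow> K h k" if hk: "h \<in> L" "k \<in> L" for h k
    unfolding JW_def K_def
  proof (rule tensor[OF WW(1) WW(2) am tm[OF hk(1)] am tm[OF hk(2)] ab tb[OF hk(1)] ab tb[OF hk(2)]])
    show "(\<lambda>n. \<integral>x. indicator {0..1} x * \<phi> x * a n h x \<partial>lborel) \<longlonglongrightarrow> (\<integral>x. indicator {0..1} x * \<phi> x * t h x \<partial>lborel)"
      if "\<phi> \<in> borel_measurable borel" "integrable lborel (\<lambda>x. indicator {0..1} x * \<phi> x)" for \<phi>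
      unfolding a_def t_def by (rule weak_a[OF L(1) \<nu> r hk(1) um conv that])
    show "(\<lambda>n. \<integral>x. indicator {0..1} x * \<phi> x * a n k x \<partial>lborel) \<longlonglongrightarrow> (\<integral>x. indicator {0..1} x * \<phi> x * t k x \<partial>lborel)"
      if "\<phi> \<in> borel_measurable borel" "integrable lborel (\<lambda>x. indicator {0..1} x * \<phi> x)" for \<phi>
      unfolding a_def t_def by (rule weak_a[OF L(1) \<nu> r hk(2) um conv that])
  qed
  have Jc: "(\<lambda>n. J n h k) \<longlonglongrightarrow> K h k" if hk: "h \<in> L" "k \<in> L" for h k
  proof -
    have "(\<lambda>n. J n h k - JW n h k) \<longlonglongrightarrow> 0"
    proof (rule Lim_null_comparison)
      show "\<forall>\<^sub>F n in sequentially. norm (J n h k - JW n h k) \<le> cut_norm (\<lambda>x y. Wn n x y - W x y)"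
        using cutb[OF hk] by simp
    qed (rule cut)
    from tendsto_add[OF JWc[OF hk] this] show ?thesis by simp
  qed
  have lim: "(\<lambda>n. \<Sum>h\<in>L. \<Sum>k\<in>L. f h k * J n h k) \<longlonglongrightarrow> (\<Sum>h\<in>L. \<Sum>k\<in>L. f h k * K h k)"
    by (intro tendsto_sum tendsto_mult_left Jc)
  have RHS: "(LINT z : {0..1}\<times>{0..1} | (lebesgue :: (real\<times>real) measure).
            W (fst z) (snd z) *
              (\<integral>p. (if fst p \<in> L \<and> snd p \<in> L then f (fst p) (snd p) else 0)
                  \<partial>(\<nu> (fst z) \<Otimes>\<^sub>M \<nu> (snd z)))) = (\<Sum>h\<in>L. \<Sum>k\<in>L. f h k * K h k)"
    unfolding rhs_eq[OF L(1) \<nu> r W] K_def t_def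
    by (intro sum.cong refl arg_cong2[where f="(*)"] Wtt[OF W] RP)
  have C: "(\<lambda>n. LINT z : {0..1}\<times>{0..1} | (lebesgue :: (real\<times>real) measure).
            Wn n (fst z) (snd z) * f (u n (fst z)) (u n (snd z)))
        \<longlonglongrightarrow> (LINT z : {0..1}\<times>{0..1} | (lebesgue :: (real\<times>real) measure).
            W (fst z) (snd z) *
              (\<integral>p. (if fst p \<in> L \<and> snd p \<in> L then f (fst p) (snd p) else 0)
                  \<partial>(\<nu> (fst z) \<Otimes>\<^sub>M \<nu> (snd z))))"
    unfolding LHS RHS by (rule lim)
  have D: "\<forall>\<theta>. theta_rep L \<nu> \<theta> \<longrightarrow>
         (LINT z : {0..1}\<times>{0..1} | (lebesgue :: (real\<times>real) measure).
            W (fst z) (snd z) *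
              (\<integral>p. (if fst p \<in> L \<and> snd p \<in> L then f (fst p) (snd p) else 0)
                  \<partial>(\<nu> (fst z) \<Otimes>\<^sub>M \<nu> (snd z))))
         = (\<Sum>h\<in>L. \<Sum>k\<in>L. f h k *
              (LINT z : {0..1}\<times>{0..1} | (lebesgue :: (real\<times>real) measure).
                 W (fst z) (snd z) * \<theta> h (fst z) * \<theta> k (snd z)))"
    using rhs_eq[OF L(1) \<nu> _ W] by blast
  show ?thesis using YX r C D by blast
qed

end
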